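(* Let $\mathcal{H}$ be a complex Hilbert space of finite dimension $n\ge2$, $m\ge2$, $\sigma$ a self-adjoint operator on $\mathcal{H}$, and $\rho$ a density operator on $\mathcal{H}^{\otimes m}$. (a) If $\rho$ is $\sigma$SMC then $\rho$ is $\sigma$EC; the converse is not true in general. (b) If $\sigma$ has nondegenerate spectrum and $\rho$ is $\sigma$SMC, then $\rho$ is RSC; the converse is not true in general. (c) If $\sigma$ has nondegenerate spectrum and $\rho$ is $\sigma$SMC, then $\rho$ is SSC; the converse is not true in general.
   Context: For $X$ an operator on $\mathcal{H}$, $X^{(i)}=I^{\otimes(i-1)}\otimes X\otimes I^{\otimes(m-i)}$. For a permutation $\pi$ of $\{1,\dots,m\}$, $U_\pi$ is the unitary on $\mathcal{H}^{\otimes m}$ with $U_\pi(X_1\otimes\cdots\otimes X_m)U_\pi^\dagger=X_{\pi(1)}\otimes\cdots\otimes X_{\pi(m)}$. Definitions: $\rho$ is $\sigma$EC ($\sigma$-expectation consensus) if $\mathrm{Tr}(\sigma^{(1)}\rho)=\cdots=\mathrm{Tr}(\sigma^{(m)}\rho)$; $\rho$ is RSC (reduced state consensus) if the reduced states $\bar\rho_k=\mathrm{Tr}_{\bigotimes_{j\ne k}\mathcal{H}_j}(\rho)$ are all equal; $\rho$ is SSC (symmetric state consensus) if $U_\pi\rho U_\pi^\dagger=\rho$ for all $\pi$; writing $\sigma=\sum_j s_j\Pi_j$ with distinct $s_j$ and spectral projectors $\Pi_j$, $\rho$ is $\sigma$SMC (single $\sigma$-measurement consensus) if $\mathrm{Tr}(\Pi_j^{(k)}\Pi_j^{(\ell)}\rho)=\mathrm{Tr}(\Pi_j^{(\ell)}\rho)$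 for all $k,\ell$ and all $j$. "Not true in general" means there exist $m,n,\sigma$ and states for which the converse implication fails. *)

theory Defs
  imports "Jordan_Normal_Form.Schur_Decomposition" "HOL-Combinatorics.Permutations"
begin

text \<open>Model: H = C^n with computational basis indexed by 0..<n; H^{tensor m} = C^(n^m),
  basis index a < n^m encodes the tuple (dig n 0 a, ..., dig n (m-1) a); tensor factors
  are numbered 0..<m (factor k here is factor k+1 of the paper).\<close>

definition dig :: "nat \<Rightarrow> nat \<Rightarrow> nat \<Rightarrow> nat" where
  "dig n k a = (a div n ^ k) mod n"

definition mtrace :: "complex mat \<Rightarrow> complex" where
  "mtrace A = (\<Sum>i<dim_row A. A $$ (i, i))"

text \<open>X^(k) = I \<otimes> ... \<otimes> X \<otimes> ... \<otimes> I (X in factor k).\<close>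
definition emb :: "nat \<Rightarrow> nat \<Rightarrow> nat \<Rightarrow> complex mat \<Rightarrow> complex mat" where
  "emb n m k X = mat (n ^ m) (n ^ m) (\<lambda>(a, b).
     if (\<forall>j<m. j \<noteq> k \<longrightarrow> dig n j a = dig n j b) then X $$ (dig n k a, dig n k b) else 0)"

definition ptrace :: "nat \<Rightarrow> nat \<Rightarrow> nat \<Rightarrow> complex mat \<Rightarrow> complex mat" where
  "ptrace n m k \<rho> = mat n n (\<lambda>(x, y).
     \<Sum>a<n ^ m. \<Sum>b<n ^ m.
       if dig n k a = x \<and> dig n k b = y \<and> (\<forall>j<m. j \<noteq> k \<longrightarrow> dig n j a = dig n j b)
       then \<rho> $$ (a, b) else 0)"

definition perm_idx :: "nat \<Rightarrow> nat \<Rightarrow> (nat \<Rightarrow> nat) \<Rightarrow> nat \<Rightarrow> nat" where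
  "perm_idx n m \<tau> a = (\<Sum>j<m. dig n (\<tau> j) a * n ^ j)"

text \<open>perm_conj n m \<pi> \<rho> = U_\<pi> \<rho> U_\<pi>^dagger, where U_\<pi>(X_1 \<otimes>...\<otimes> X_m)U_\<pi>^dagger
  = X_\<pi>(1) \<otimes> ... \<otimes> X_\<pi>(m).\<close>
definition perm_conj :: "nat \<Rightarrow> nat \<Rightarrow> (nat \<Rightarrow> nat) \<Rightarrow> complex mat \<Rightarrow> complex mat" where
  "perm_conj n m \<pi> \<rho> = mat (n ^ m) (n ^ m) (\<lambda>(a, b).
     \<rho> $$ (perm_idx n m (inv_into UNIV \<pi>) a, perm_idx n m (inv_into UNIV \<pi>) b))"

definition self_adjoint :: "nat \<Rightarrow> complex mat \<Rightarrow> bool" where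
  "self_adjoint d A \<longleftrightarrow> A \<in> carrier_mat d d \<and> mat_adjoint A = A"

definition density_op :: "nat \<Rightarrow> complex mat \<Rightarrow> bool" where
  "density_op d \<rho> \<longleftrightarrow> self_adjoint d \<rho> \<and> mtrace \<rho> = 1 \<and>
     (\<forall>v \<in> carrier_vec d. Im (conjugate v \<bullet> (\<rho> *\<^sub>v v)) = 0 \<and> Re (conjugate v \<bullet> (\<rho> *\<^sub>v v)) \<ge> 0)"

definition is_eigenvalue :: "nat \<Rightarrow> complex mat \<Rightarrow> complex \<Rightarrow> bool" where
  "is_eigenvalue d A s \<longleftrightarrow> (\<exists>v \<in> carrier_vec d. v \<noteq> 0\<^sub>v d \<and> A *\<^sub>v v = s \<cdot>\<^sub>v v)"

definition spectral_proj :: "nat \<Rightarrow> complex mat \<Rightarrow> complex \<Rightarrow> complex mat \<Rightarrow> bool" where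
  "spectral_proj d \<sigma> s P \<longleftrightarrow> is_eigenvalue d \<sigma> s \<and> self_adjoint d P \<and> P * P = P \<and>
     (\<forall>v \<in> carrier_vec d. P *\<^sub>v v = v \<longleftrightarrow> \<sigma> *\<^sub>v v = s \<cdot>\<^sub>v v)"

definition nondegenerate :: "nat \<Rightarrow> complex mat \<Rightarrow> bool" where
  "nondegenerate d \<sigma> \<longleftrightarrow> card {s. is_eigenvalue d \<sigma> s} = d"

definition setting :: "nat \<Rightarrow> nat \<Rightarrow> complex mat \<Rightarrow> complex mat \<Rightarrow> bool" where
  "setting n m \<sigma> \<rho> \<longleftrightarrow> n \<ge> 2 \<and> m \<ge> 2 \<and> self_adjoint n \<sigma> \<and> density_op (n ^ m) \<rho>"

definition EC :: "nat \<Rightarrow> nat \<Rightarrow> complex mat \<Rightarrow> complex mat \<Rightarrow> bool" where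
  "EC n m \<sigma> \<rho> \<longleftrightarrow> (\<forall>k<m. \<forall>l<m. mtrace (emb n m k \<sigma> * \<rho>) = mtrace (emb n m l \<sigma> * \<rho>))"

definition RSC :: "nat \<Rightarrow> nat \<Rightarrow> complex mat \<Rightarrow> bool" where
  "RSC n m \<rho> \<longleftrightarrow> (\<forall>k<m. \<forall>l<m. ptrace n m k \<rho> = ptrace n m l \<rho>)"

definition SSC :: "nat \<Rightarrow> nat \<Rightarrow> complex mat \<Rightarrow> bool" where
  "SSC n m \<rho> \<longleftrightarrow> (\<forall>\<pi>. \<pi> permutes {..<m} \<longrightarrow> perm_conj n m \<pi> \<rho> = \<rho>)"

definition SMC :: "nat \<Rightarrow> nat \<Rightarrow> complex mat \<Rightarrow> complex mat \<Rightarrow> bool" where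
  "SMC n m \<sigma> \<rho> \<longleftrightarrow> (\<forall>s P. spectral_proj n \<sigma> s P \<longrightarrow>
     (\<forall>k<m. \<forall>l<m. mtrace (emb n m k P * emb n m l P * \<rho>) = mtrace (emb n m l P * \<rho>)))"

end

theory Submission
  imports Defs "Jordan_Normal_Form.Jordan_Normal_Form_Uniqueness" "Jordan_Normal_Form.Jordan_Normal_Form_Existence"
begin

lemma dig_lt: "0 < n \<Longrightarrow> dig n k a < n"
  by (simp add: dig_def)

lemma dig_0: "dig n 0 a = a mod n" by (simp add: dig_def)
lemma dig_Suc: "dig n (Suc k) a = dig n k (a div n)"
  by (simp add: dig_def div_mult2_eq mult.commute)

lemma dig_unique:
  assumes "a < n ^ m" "b < n ^ m" "\<forall>j<m. dig n j a = dig n j b"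
  shows "a = b"
  using assms
proof (induction m arbitrary: a b)
  case 0 then show ?case by simp
next
  case (Suc m)
  have "n > 0" using Suc.prems(1) by (cases n) auto
  have "a div n < n ^ m" "b div n < n ^ m" using Suc.prems(1,2)
    by (simp_all add: less_mult_imp_div_less mult.commute)
  moreover have "\<forall>j<m. dig n j (a div n) = dig n j (b div n)"
    using Suc.prems(3) by (metis Suc_mono dig_Suc)
  ultimately have "a div n = b div n" using Suc.IH by blast
  moreover have "a mod n = b mod n" using Suc.prems(3) by (metis dig_0 zero_less_Suc)
  ultimately show ?case by (metis div_mult_mod_eq)
qed

definition enc :: "nat \<Rightarrow> nat \<Rightarrow> (nat \<Rightarrow> nat) \<Rightarrow> nat" where
  "enc n m d = (\<Sum>j<m. d j * n ^ j)"

lemma enc_Suc: "enc n (Suc m) d = d 0 + n * enc n m (\<lambda>j. d (Suc j))"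
proof -
  have "(\<Sum>j<m. d (Suc j) * n ^ Suc j) = n * (\<Sum>j<m. d (Suc j) * n ^ j)"
    by (simp add: sum_distrib_left algebra_simps)
  then show ?thesis unfolding enc_def sum.lessThan_Suc_shift by simp
qed

lemma enc_lt: "\<forall>j<m. d j < n \<Longrightarrow> enc n m d < n ^ m"
proof (induction m arbitrary: d)
  case 0 then show ?case by (simp add: enc_def)
next
  case (Suc m)
  have "enc n m (\<lambda>j. d (Suc j)) < n ^ m" using Suc by auto
  hence "enc n m (\<lambda>j. d (Suc j)) + 1 \<le> n ^ m" by simp
  hence "n * (enc n m (\<lambda>j. d (Suc j)) + 1) \<le> n * n ^ m" by (rule mult_le_mono2)
  moreover have "d 0 < n" using Suc.prems by auto
  ultimately show ?case unfolding enc_Suc by (simp add: algebra_simps)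
qed

lemma dig_enc: "\<forall>j<m. d j < n \<Longrightarrow> k < m \<Longrightarrow> dig n k (enc n m d) = d k"
proof (induction m arbitrary: d k)
  case 0 then show ?case by simp
next
  case (Suc m)
  have d0: "d 0 < n" using Suc.prems by auto
  show ?case
  proof (cases k)
    case 0
    have "(d 0 + n * enc n m (\<lambda>j. d (Suc j))) mod n = d 0 mod n" by simp
    then show ?thesis using d0 0 by (simp add: enc_Suc dig_0)
  next
    case (Suc k')
    have "(d 0 + n * enc n m (\<lambda>j. d (Suc j))) div n = enc n m (\<lambda>j. d (Suc j))"
      using d0 by simp
    then show ?thesis unfolding enc_Suc Suc dig_Suc using Suc.IH[of "\<lambda>j. d (Suc j)" k'] Suc.prems Suc
      by auto
  qed
qed

lemma perm_idx_enc: "perm_idx n m f a = enc n m (\<lambda>j. dig n (f j) a)"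
  by (simp add: perm_idx_def enc_def)

definition agree :: "nat \<Rightarrow> nat \<Rightarrow> nat set \<Rightarrow> nat \<Rightarrow> nat \<Rightarrow> bool" where
  "agree n m K a b \<longleftrightarrow> (\<forall>j<m. j \<notin> K \<longrightarrow> dig n j a = dig n j b)"

definition upd :: "nat \<Rightarrow> nat \<Rightarrow> nat \<Rightarrow> nat \<Rightarrow> nat \<Rightarrow> nat" where
  "upd n m a k x = enc n m (\<lambda>j. if j = k then x else dig n j a)"

lemma upd_lt: "0 < n \<Longrightarrow> x < n \<Longrightarrow> upd n m a k x < n ^ m"
  unfolding upd_def by (rule enc_lt) (auto simp: dig_lt)

lemma dig_upd: "0 < n \<Longrightarrow> x < n \<Longrightarrow> j < m \<Longrightarrow> dig n j (upd n m a k x) = (if j = k then x else dig n j a)"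
  unfolding upd_def by (subst dig_enc) (auto simp: dig_lt)

lemma mult_entry: "A \<in> carrier_mat nr nk \<Longrightarrow> B \<in> carrier_mat nk nc \<Longrightarrow> i < nr \<Longrightarrow> j < nc \<Longrightarrow>
  (A * B) $$ (i, j) = (\<Sum>c<nk. A $$ (i, c) * B $$ (c, j))"
  by (auto simp: scalar_prod_def atLeast0LessThan intro!: sum.cong)

lemma emb_carrier[simp]: "emb n m k X \<in> carrier_mat (n^m) (n^m)"
  by (simp add: emb_def)
lemma emb_dim[simp]: "dim_row (emb n m k X) = n^m" "dim_col (emb n m k X) = n^m"
  by (simp_all add: emb_def)

lemma emb_index: "a < n^m \<Longrightarrow> b < n^m \<Longrightarrow>
  emb n m k X $$ (a, b) = (if agree n m {k} a b then X $$ (dig n k a, dig n k b) else 0)"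
  by (simp add: emb_def agree_def)

lemma agree_set: assumes "0 < n" "k < m" "a < n^m"
  shows "{c \<in> {..<n^m}. agree n m {k} a c} = upd n m a k ` {..<n}"
proof
  show "upd n m a k ` {..<n} \<subseteq> {c \<in> {..<n^m}. agree n m {k} a c}"
    using assms by (auto simp: upd_lt agree_def dig_upd)
  show "{c \<in> {..<n^m}. agree n m {k} a c} \<subseteq> upd n m a k ` {..<n}"
  proof
    fix c assume c: "c \<in> {c \<in> {..<n^m}. agree n m {k} a c}"
    have "c = upd n m a k (dig n k c)"
      apply (rule dig_unique[of _ n m])
      using c assms by (auto simp: upd_lt dig_lt dig_upd agree_def)
    then show "c \<in> upd n m a k ` {..<n}" using assms by (auto simp: dig_lt)
  qed
qed

lemma inj_upd: "0 < n \<Longrightarrow> k < m \<Longrightarrow> inj_on (upd n m a k) {..<n}"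
  by (rule inj_onI) (metis dig_upd lessThan_iff)

lemma sum_agree: assumes "0 < n" "k < m" "a < n^m"
  shows "(\<Sum>c<n^m. if agree n m {k} a c then f c else 0) = (\<Sum>x<n. f (upd n m a k x))"
proof -
  have "(\<Sum>c<n^m. if agree n m {k} a c then f c else 0) = sum f {c \<in> {..<n^m}. agree n m {k} a c}"
    by (rule sum.inter_filter[symmetric]) simp
  also have "\<dots> = sum f (upd n m a k ` {..<n})" using agree_set[OF assms] by simp
  also have "\<dots> = (\<Sum>x<n. f (upd n m a k x))" using inj_upd[OF assms(1,2)] by (simp add: sum.reindex)
  finally show ?thesis .
qed

lemma agree_upd: "0 < n \<Longrightarrow> x < n \<Longrightarrow> k \<in> K \<Longrightarrow> agree n m K (upd n m a k x) b = agree n m K a b"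
  unfolding agree_def by (auto simp: dig_upd)

lemma emb_mult_same: assumes "0 < n" "k < m" "A \<in> carrier_mat n n" "B \<in> carrier_mat n n"
  shows "emb n m k A * emb n m k B = emb n m k (A * B)"
proof (rule eq_matI)
  fix a b assume ab: "a < dim_row (emb n m k (A * B))" "b < dim_col (emb n m k (A * B))"
  hence a: "a < n^m" and b: "b < n^m" by auto
  have "(emb n m k A * emb n m k B) $$ (a, b) =
     (\<Sum>c<n^m. emb n m k A $$ (a, c) * emb n m k B $$ (c, b))"
    using a b by (intro mult_entry) auto
  also have "\<dots> = (\<Sum>c<n^m. if agree n m {k} a c then A $$ (dig n k a, dig n k c) * emb n m k B $$ (c, b) else 0)"
    using a by (intro sum.cong) (auto simp: emb_index)
  also have "\<dots> = (\<Sum>x<n. A $$ (dig n k a, dig n k (upd n m a k x)) * emb n m k B $$ (upd n m a k x, b))"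
    by (rule sum_agree[OF assms(1,2) a])
  also have "\<dots> = (\<Sum>x<n. if agree n m {k} a b then A $$ (dig n k a, x) * B $$ (x, dig n k b) else 0)"
    using assms b by (intro sum.cong) (auto simp: emb_index upd_lt dig_upd agree_upd)
  also have "\<dots> = emb n m k (A * B) $$ (a, b)"
  proof -
    have "(A * B) $$ (dig n k a, dig n k b) = (\<Sum>x<n. A $$ (dig n k a, x) * B $$ (x, dig n k b))"
      using assms by (intro mult_entry) (auto simp: dig_lt)
    then show ?thesis using assms a b by (simp add: emb_index)
  qed
  finally show "(emb n m k A * emb n m k B) $$ (a, b) = emb n m k (A * B) $$ (a, b)" .
qed auto

definition emb2 :: "nat \<Rightarrow> nat \<Rightarrow> nat \<Rightarrow> nat \<Rightarrow> complex mat \<Rightarrow> complex mat \<Rightarrow> complex mat" where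
  "emb2 n m k l A B = mat (n ^ m) (n ^ m) (\<lambda>(a, b).
     if agree n m {k, l} a b then A $$ (dig n k a, dig n k b) * B $$ (dig n l a, dig n l b) else 0)"

lemma emb2_carrier[simp]: "emb2 n m k l A B \<in> carrier_mat (n^m) (n^m)"
  by (simp add: emb2_def)
lemma emb2_dim[simp]: "dim_row (emb2 n m k l A B) = n^m" "dim_col (emb2 n m k l A B) = n^m"
  by (simp_all add: emb2_def)
lemma emb2_index: "a < n^m \<Longrightarrow> b < n^m \<Longrightarrow> emb2 n m k l A B $$ (a, b) =
     (if agree n m {k, l} a b then A $$ (dig n k a, dig n k b) * B $$ (dig n l a, dig n l b) else 0)"
  by (simp add: emb2_def)

lemma emb2_comm: "emb2 n m k l A B = emb2 n m l k B A"
  unfolding emb2_def by (rule eq_matI) (auto simp: insert_commute)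

lemma emb_mult_diff: assumes "0 < n" "k < m" "l < m" "k \<noteq> l" "A \<in> carrier_mat n n" "B \<in> carrier_mat n n"
  shows "emb n m k A * emb n m l B = emb2 n m k l A B"
proof (rule eq_matI)
  fix a b assume ab: "a < dim_row (emb2 n m k l A B)" "b < dim_col (emb2 n m k l A B)"
  hence a: "a < n^m" and b: "b < n^m" by auto
  have "(emb n m k A * emb n m l B) $$ (a, b) =
     (\<Sum>c<n^m. emb n m k A $$ (a, c) * emb n m l B $$ (c, b))"
    using a b by (intro mult_entry) auto
  also have "\<dots> = (\<Sum>c<n^m. if agree n m {k} a c then A $$ (dig n k a, dig n k c) * emb n m l B $$ (c, b) else 0)"
    using a by (intro sum.cong) (auto simp: emb_index)
  also have "\<dots> = (\<Sum>x<n. A $$ (dig n k a, dig n k (upd n m a k x)) * emb n m l B $$ (upd n m a k x, b))"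
    by (rule sum_agree[OF assms(1,2) a])
  also have "\<dots> = (\<Sum>x<n. if x = dig n k b then (if agree n m {k, l} a b then A $$ (dig n k a, dig n k b) * B $$ (dig n l a, dig n l b) else 0) else 0)"
  proof (intro sum.cong refl)
    fix x assume x: "x \<in> {..<n}"
    have "agree n m {l} (upd n m a k x) b \<longleftrightarrow> x = dig n k b \<and> agree n m {k, l} a b"
      using assms x unfolding agree_def by (auto simp: dig_upd)
    then show "A $$ (dig n k a, dig n k (upd n m a k x)) * emb n m l B $$ (upd n m a k x, b) =
      (if x = dig n k b then (if agree n m {k, l} a b then A $$ (dig n k a, dig n k b) * B $$ (dig n l a, dig n l b) else 0) else 0)"
      using assms x b by (auto simp: emb_index upd_lt dig_upd)
  qed
  also have "\<dots> = emb2 n m k l A B $$ (a, b)"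
    using assms a b by (simp add: emb2_index dig_lt)
  finally show "(emb n m k A * emb n m l B) $$ (a, b) = emb2 n m k l A B $$ (a, b)" .
qed auto

lemma emb_one: assumes "0 < n" shows "emb n m k (1\<^sub>m n) = 1\<^sub>m (n^m)"
proof (rule eq_matI)
  fix a b assume "a < dim_row (1\<^sub>m (n^m))" "b < dim_col (1\<^sub>m (n^m))"
  hence a: "a < n^m" and b: "b < n^m" by auto
  have "n > 0" using assms by auto
  have "(agree n m {k} a b \<and> dig n k a = dig n k b) \<longleftrightarrow> a = b"
    using dig_unique[OF a b] unfolding agree_def by auto
  then show "emb n m k (1\<^sub>m n) $$ (a, b) = 1\<^sub>m (n^m) $$ (a, b)"
    using a b \<open>n > 0\<close> by (auto simp: emb_index dig_lt)
qed auto

lemma emb2_one_left: assumes "k \<noteq> l" "0 < n" "k < m"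
  shows "emb2 n m k l (1\<^sub>m n) B = emb n m l B"
proof (rule eq_matI)
  fix a b assume "a < dim_row (emb n m l B)" "b < dim_col (emb n m l B)"
  hence a: "a < n^m" and b: "b < n^m" by auto
  have "(agree n m {k, l} a b \<and> dig n k a = dig n k b) \<longleftrightarrow> agree n m {l} a b"
    using assms unfolding agree_def by auto
  then show "emb2 n m k l (1\<^sub>m n) B $$ (a, b) = emb n m l B $$ (a, b)"
    using a b assms by (auto simp: emb_index emb2_index dig_lt)
qed auto

lemma adj_dim[simp]: "dim_row (mat_adjoint A) = dim_col A" "dim_col (mat_adjoint A) = dim_row A"
  by (simp_all add: mat_adjoint_def mat_of_rows_def)

lemma adj_index[simp]: "i < dim_col A \<Longrightarrow> j < dim_row A \<Longrightarrow> mat_adjoint A $$ (i, j) = conjugate (A $$ (j, i))"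
  by (simp add: mat_adjoint_def mat_of_rows_def)

lemma adj_carrier[simp]: "A \<in> carrier_mat nr nc \<Longrightarrow> mat_adjoint A \<in> carrier_mat nc nr"
  unfolding carrier_mat_def by simp

lemma adj_adj: "mat_adjoint (mat_adjoint (A :: complex mat)) = A"
  by (rule eq_matI) auto

lemma adj_mult: assumes "A \<in> carrier_mat nr nk" "B \<in> carrier_mat nk nc"
  shows "mat_adjoint (A * B) = mat_adjoint B * mat_adjoint (A :: complex mat)"
proof (rule eq_matI)
  fix i j assume "i < dim_row (mat_adjoint B * mat_adjoint A)" "j < dim_col (mat_adjoint B * mat_adjoint A)"
  hence i: "i < nc" and j: "j < nr" using assms by auto
  have "mat_adjoint (A * B) $$ (i, j) = conjugate (\<Sum>c<nk. A $$ (j, c) * B $$ (c, i))"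
    using assms i j by (simp add: mult_entry[OF assms, symmetric])
  also have "\<dots> = (\<Sum>c<nk. mat_adjoint B $$ (i, c) * mat_adjoint A $$ (c, j))"
    using assms i j by (simp add: mult.commute)
  also have "\<dots> = (mat_adjoint B * mat_adjoint A) $$ (i, j)"
    using assms i j by (intro mult_entry[symmetric]) auto
  finally show "mat_adjoint (A * B) $$ (i, j) = (mat_adjoint B * mat_adjoint A) $$ (i, j)" .
qed (use assms in auto)

lemma adj_smult: "mat_adjoint (c \<cdot>\<^sub>m (A :: complex mat)) = conjugate c \<cdot>\<^sub>m mat_adjoint A"
  by (rule eq_matI) auto

lemma adj_sprod: assumes "A \<in> carrier_mat nr nc" "v \<in> carrier_vec nr" "w \<in> carrier_vec nc"
  shows "conjugate v \<bullet> (A *\<^sub>v w) = conjugate (mat_adjoint A *\<^sub>v v) \<bullet> (w :: complex vec)"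
proof -
  have "conjugate v \<bullet> (A *\<^sub>v w) = (\<Sum>i<nr. conjugate (v $ i) * (\<Sum>j<nc. A $$ (i, j) * w $ j))"
    using assms by (auto simp: scalar_prod_def atLeast0LessThan intro!: sum.cong)
  also have "\<dots> = (\<Sum>i<nr. \<Sum>j<nc. conjugate (v $ i) * A $$ (i, j) * w $ j)"
    by (simp add: sum_distrib_left mult.assoc)
  also have "\<dots> = (\<Sum>j<nc. \<Sum>i<nr. conjugate (v $ i) * A $$ (i, j) * w $ j)"
    by (rule sum.swap)
  also have "\<dots> = (\<Sum>j<nc. conjugate (\<Sum>i<nr. conjugate (A $$ (i, j)) * v $ i) * w $ j)"
    by (simp add: sum_distrib_left sum_distrib_right mult.commute mult.left_commute)
  also have "\<dots> = conjugate (mat_adjoint A *\<^sub>v v) \<bullet> w"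
    using assms by (auto simp: scalar_prod_def atLeast0LessThan intro!: sum.cong)
  finally show ?thesis .
qed

lemma sq_zero: assumes "w \<in> carrier_vec n" "conjugate w \<bullet> w = (0::complex)" shows "w = 0\<^sub>v n"
proof -
  have "w \<bullet>c w = conjugate w \<bullet> w" by (rule conjugate_vec_sprod_comm[OF assms(1) assms(1)])
  hence "w \<bullet>c w = 0" using assms(2) by simp
  then show ?thesis using conjugate_square_eq_0_vec[OF assms(1)] by blast
qed

lemma sq_nonzero: assumes "w \<in> carrier_vec n" "w \<noteq> 0\<^sub>v n" shows "conjugate w \<bullet> w \<noteq> (0::complex)"
  using sq_zero assms by blast

lemma herm_real_ev: fixes \<sigma> :: "complex mat" assumes "\<sigma> \<in> carrier_mat n n" "mat_adjoint \<sigma> = \<sigma>" "w \<in> carrier_vec n" "w \<noteq> 0\<^sub>v n"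
  "\<sigma> *\<^sub>v w = e \<cdot>\<^sub>v w"
  shows "conjugate e = e"
proof -
  have "conjugate w \<bullet> (\<sigma> *\<^sub>v w) = conjugate (\<sigma> *\<^sub>v w) \<bullet> w"
    using adj_sprod[OF assms(1,3,3)] assms(2) by simp
  hence "e * (conjugate w \<bullet> w) = conjugate e * (conjugate w \<bullet> w)"
    using assms by (simp add: conjugate_smult_vec)
  then show ?thesis using sq_nonzero[OF assms(3,4)] by simp
qed

lemma row_sprod: "A \<in> carrier_mat nr nc \<Longrightarrow> v \<in> carrier_vec nc \<Longrightarrow> i < nr \<Longrightarrow>
  row A i \<bullet> v = (\<Sum>j<nc. A $$ (i, j) * v $ j)"
  by (auto simp: scalar_prod_def atLeast0LessThan intro!: sum.cong)

lemma mv_entry: "A \<in> carrier_mat nr nc \<Longrightarrow> v \<in> carrier_vec nc \<Longrightarrow> i < nr \<Longrightarrow>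
  (A *\<^sub>v v) $ i = (\<Sum>j<nc. A $$ (i, j) * v $ j)"
  by (auto simp: scalar_prod_def atLeast0LessThan intro!: sum.cong)

lemma char_matrix_mv: fixes \<sigma> :: "complex mat" assumes "\<sigma> \<in> carrier_mat n n" "v \<in> carrier_vec n"
  shows "char_matrix \<sigma> e *\<^sub>v v = \<sigma> *\<^sub>v v - e \<cdot>\<^sub>v v"
proof (rule eq_vecI)
  fix i assume "i < dim_vec (\<sigma> *\<^sub>v v - e \<cdot>\<^sub>v v)"
  hence i: "i < n" using assms by simp
  have "(char_matrix \<sigma> e *\<^sub>v v) $ i = (\<Sum>j<n. (\<sigma> $$ (i, j) - (if i = j then e else 0)) * v $ j)"
    using assms i by (subst mv_entry[of _ n n]) (auto simp: char_matrix_def intro!: sum.cong)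
  also have "\<dots> = (\<Sum>j<n. \<sigma> $$ (i, j) * v $ j - (if i = j then e * v $ j else 0))"
    by (intro sum.cong) (auto simp: algebra_simps)
  also have "\<dots> = (\<Sum>j<n. \<sigma> $$ (i, j) * v $ j) - (\<Sum>j<n. (if i = j then e * v $ j else 0))"
    by (rule sum_subtractf)
  also have "\<dots> = (\<sigma> *\<^sub>v v - e \<cdot>\<^sub>v v) $ i"
    using assms i by (simp add: row_sprod[of _ n n])
  finally show "(char_matrix \<sigma> e *\<^sub>v v) $ i = (\<sigma> *\<^sub>v v - e \<cdot>\<^sub>v v) $ i" .
qed (use assms in \<open>auto simp: char_matrix_def\<close>)

lemma herm_kernel: fixes \<sigma> :: "complex mat" assumes S: "\<sigma> \<in> carrier_mat n n" and H: "mat_adjoint \<sigma> = \<sigma>"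
  shows "mat_kernel (char_matrix \<sigma> e ^\<^sub>m 2) = mat_kernel (char_matrix \<sigma> e ^\<^sub>m 1)"
proof -
  define B where "B = char_matrix \<sigma> e"
  have B: "B \<in> carrier_mat n n" using S by (simp add: B_def)
  have B1: "B ^\<^sub>m 1 = B" using B by simp
  have B2: "B ^\<^sub>m 2 = B * B" using B by (simp add: numeral_2_eq_2)
  {
    fix v assume v: "v \<in> carrier_vec n" and vv: "B *\<^sub>v (B *\<^sub>v v) = 0\<^sub>v n"
    define w where "w = B *\<^sub>v v"
    have w: "w \<in> carrier_vec n" using B v by (simp add: w_def)
    have ew: "\<sigma> *\<^sub>v w = e \<cdot>\<^sub>v w"
    proof (rule eq_vecI)
      fix i assume "i < dim_vec (e \<cdot>\<^sub>v w)"
      hence i: "i < n" using w by simp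
      have h: "\<sigma> *\<^sub>v w - e \<cdot>\<^sub>v w = 0\<^sub>v n"
        using char_matrix_mv[OF S w, of e] vv unfolding B_def[symmetric] w_def[symmetric] by simp
      have "(\<sigma> *\<^sub>v w - e \<cdot>\<^sub>v w) $ i = 0" using h i by simp
      then show "(\<sigma> *\<^sub>v w) $ i = (e \<cdot>\<^sub>v w) $ i" using i S w by simp
    qed (use S w in simp)
    have "w = 0\<^sub>v n"
    proof (rule ccontr)
      assume w0: "w \<noteq> 0\<^sub>v n"
      have re: "conjugate e = e" using herm_real_ev[OF S H w w0 ew] .
      have Hij: "conjugate (\<sigma> $$ (j, i)) = \<sigma> $$ (i, j)" if "i < n" "j < n" for i j
        using adj_index[of i \<sigma> j] that S H by auto
      have BH: "mat_adjoint B = B"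
      proof (rule eq_matI)
        fix i j assume "i < dim_row B" "j < dim_col B"
        hence ij: "i < n" "j < n" using B by auto
        show "mat_adjoint B $$ (i, j) = B $$ (i, j)"
          using ij B S Hij[OF ij] re unfolding B_def char_matrix_def by auto
      qed (use B in auto)
      have "conjugate w \<bullet> w = conjugate (B *\<^sub>v v) \<bullet> w" by (simp add: w_def)
      also have "\<dots> = conjugate v \<bullet> (B *\<^sub>v w)"
        using adj_sprod[OF B v w] BH by simp
      also have "\<dots> = 0" using vv v by (simp add: w_def)
      finally show False using sq_nonzero[OF w w0] by simp
    qed
  }
  then show ?thesis
    unfolding B_def[symmetric] B1 B2 mat_kernel_def using B
    by (auto simp: assoc_mult_mat_vec[of _ n n _ n])
qed

lemma sum_list_le_eq: fixes f g :: "'a \<Rightarrow> nat"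
  shows "(\<forall>x\<in>set xs. g x \<le> f x) \<Longrightarrow> sum_list (map f xs) = sum_list (map g xs) \<Longrightarrow> \<forall>x\<in>set xs. f x = g x"
proof (induction xs)
  case Nil then show ?case by simp
next
  case (Cons a xs)
  have "sum_list (map g xs) \<le> sum_list (map f xs)" using Cons.prems(1) by (intro sum_list_mono) auto
  moreover have "g a \<le> f a" using Cons.prems(1) by auto
  ultimately have "f a = g a" "sum_list (map f xs) = sum_list (map g xs)" using Cons.prems(2) by auto
  moreover have "\<forall>x\<in>set xs. f x = g x"
    using Cons.IH Cons.prems(1) \<open>sum_list (map f xs) = sum_list (map g xs)\<close> by simp
  ultimately show ?case by simp
qed

lemma jm_diag: "(\<forall>(k, a)\<in>set n_as. k = 1) \<Longrightarrow> i < sum_list (map fst n_as) \<Longrightarrow> j < sum_list (map fst n_as) \<Longrightarrow> i \<noteq> j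
  \<Longrightarrow> jordan_matrix n_as $$ (i, j) = (0 :: 'a :: {zero,one})"
proof (induction n_as arbitrary: i j)
  case Nil then show ?case by simp
next
  case (Cons ka n_as)
  obtain k a where ka: "ka = (k, a)" by force
  have k: "k = 1" using Cons.prems(1) ka by auto
  have IH: "\<And>i j. i < sum_list (map fst n_as) \<Longrightarrow> j < sum_list (map fst n_as) \<Longrightarrow> i \<noteq> j \<Longrightarrow>
    jordan_matrix n_as $$ (i, j) = (0::'a)" using Cons by auto
  have dims: "dim_row (jordan_matrix n_as) = sum_list (map fst n_as)" "dim_col (jordan_matrix n_as) = sum_list (map fst n_as)"
    by simp_all
  show ?case
    unfolding ka jordan_matrix_Cons
    using Cons.prems(2,3,4) k ka IH[of "i - 1" "j - 1"]
    by (auto simp: dims)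
qed

lemma herm_diag: fixes \<sigma> :: "complex mat"
  assumes S: "\<sigma> \<in> carrier_mat n n" and H: "mat_adjoint \<sigma> = \<sigma>"
  obtains P Q J where "P \<in> carrier_mat n n" "Q \<in> carrier_mat n n" "J \<in> carrier_mat n n"
    "P * Q = 1\<^sub>m n" "Q * P = 1\<^sub>m n" "\<sigma> = P * J * Q"
    "\<And>i j. i < n \<Longrightarrow> j < n \<Longrightarrow> i \<noteq> j \<Longrightarrow> J $$ (i, j) = 0"
proof -
  obtain as where "char_poly \<sigma> = (\<Prod>a\<leftarrow>as. [:- a, 1:])" using char_poly_factorized[OF S] by auto
  then obtain n_as where jnf: "jordan_nf \<sigma> n_as" using jordan_nf_exists[OF S] by blast
  have dge: "dim_gen_eigenspace \<sigma> e 2 = dim_gen_eigenspace \<sigma> e 1" for e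
  proof -
    have c2: "char_matrix \<sigma> e ^\<^sub>m 2 \<in> carrier_mat n n" and c1: "char_matrix \<sigma> e ^\<^sub>m 1 \<in> carrier_mat n n"
      using S by auto
    show ?thesis unfolding dim_gen_eigenspace_def kernel_dim_def
      using herm_kernel[OF S H, of e] c1 c2 by simp
  qed
  have sizes: "\<forall>(k, a)\<in>set n_as. k = 1"
  proof
    fix x assume x: "x \<in> set n_as"
    obtain k a where xka: "x = (k, a)" by force
    let ?L = "map fst (filter (\<lambda>(n, e). e = a) n_as)"
    have "sum_list (map (min 2) ?L) = sum_list (map (min 1) ?L)"
      using dge[of a] unfolding dim_gen_eigenspace[OF jnf] by simp
    hence "\<forall>y\<in>set ?L. min 2 y = min 1 y" by (intro sum_list_le_eq) auto
    moreover have "k \<in> set ?L" using x xka by force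
    ultimately have "min 2 k = min 1 k" by blast
    moreover have "k \<noteq> 0" using jnf x xka unfolding jordan_nf_def by force
    ultimately show "case x of (k, a) \<Rightarrow> k = 1" using xka by simp
  qed
  from jnf obtain P Q where wit: "similar_mat_wit \<sigma> (jordan_matrix n_as) P Q"
    unfolding jordan_nf_def similar_mat_def by blast
  have nr: "n = dim_row \<sigma>" using S by simp
  note D = similar_mat_witD[OF nr wit]
  have Jd: "sum_list (map fst n_as) = n" using D(5) jordan_matrix_dim(1)[of n_as] unfolding carrier_mat_def by simp
  show ?thesis
  proof (rule that[OF D(6,7,5,1,2,3)])
    fix i j assume "i < n" "j < n" "i \<noteq> j"
    then show "jordan_matrix n_as $$ (i, j) = 0" using jm_diag[OF sizes] Jd by auto
  qed
qed

lemma smult_mat_vec: "A \<in> carrier_mat nr nc \<Longrightarrow> v \<in> carrier_vec nc \<Longrightarrow>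
  (k \<cdot>\<^sub>m A) *\<^sub>v v = k \<cdot>\<^sub>v (A *\<^sub>v (v :: complex vec))"
  by (rule eq_vecI) (auto simp: row_sprod[of _ nr nc] sum_distrib_left mult.assoc)

lemma tri_mult: assumes "P \<in> carrier_mat n n" "Q \<in> carrier_mat n n" "X \<in> carrier_mat n n" "Y \<in> carrier_mat n n"
  "Q * P = 1\<^sub>m n"
  shows "(P * X * Q) * (P * Y * Q) = P * (X * Y) * (Q :: complex mat)"
proof -
  have "(P * X * Q) * (P * Y * Q) = P * X * (Q * (P * Y * Q))"
    using assms by (intro assoc_mult_mat[of _ n n _ n _ n]) auto
  also have "Q * (P * Y * Q) = Q * (P * (Y * Q))" using assms by simp
  also have "\<dots> = (Q * P) * (Y * Q)" using assms by (intro assoc_mult_mat[symmetric, of _ n n _ n _ n]) auto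
  also have "\<dots> = Y * Q" using assms by simp
  also have "P * X * (Y * Q) = P * (X * (Y * Q))" using assms by (intro assoc_mult_mat[of _ n n _ n _ n]) auto
  also have "X * (Y * Q) = X * Y * Q" using assms by (intro assoc_mult_mat[symmetric, of _ n n _ n _ n]) auto
  also have "P * (X * Y * Q) = P * (X * Y) * Q" using assms by (intro assoc_mult_mat[symmetric, of _ n n _ n _ n]) auto
  finally show ?thesis .
qed

lemma tri_entry: assumes "A \<in> carrier_mat n n" "X \<in> carrier_mat n n" "B \<in> carrier_mat n n"
  "\<And>a b. a < n \<Longrightarrow> b < n \<Longrightarrow> a \<noteq> b \<Longrightarrow> X $$ (a, b) = 0" "i < n" "j < n"
  shows "(A * X * B) $$ (i, j) = (\<Sum>a<n. A $$ (i, a) * X $$ (a, a) * B $$ (a, j))"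
proof -
  have AX: "(A * X) $$ (i, b) = A $$ (i, b) * X $$ (b, b)" if b: "b < n" for b
  proof -
    have "(A * X) $$ (i, b) = (\<Sum>a<n. A $$ (i, a) * X $$ (a, b))" using assms b by (intro mult_entry) auto
    also have "\<dots> = (\<Sum>a<n. if a = b then A $$ (i, a) * X $$ (a, b) else 0)"
      using assms(4) b by (intro sum.cong) auto
    also have "\<dots> = A $$ (i, b) * X $$ (b, b)" using b by simp
    finally show ?thesis .
  qed
  have "(A * X * B) $$ (i, j) = (\<Sum>b<n. (A * X) $$ (i, b) * B $$ (b, j))"
    using assms by (intro mult_entry[of _ n n]) auto
  also have "\<dots> = (\<Sum>a<n. A $$ (i, a) * X $$ (a, a) * B $$ (a, j))"
    using AX by (intro sum.cong) auto
  finally show ?thesis .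
qed

definition Dm :: "nat \<Rightarrow> complex mat \<Rightarrow> complex \<Rightarrow> complex mat" where
  "Dm n J s = mat n n (\<lambda>(i, j). if i = j \<and> J $$ (i, i) = s then 1 else 0)"

lemma Dm_carrier[simp]: "Dm n J s \<in> carrier_mat n n" by (simp add: Dm_def)

context
  fixes n :: nat and \<sigma> P Q J :: "complex mat"
  assumes S: "\<sigma> \<in> carrier_mat n n" and H: "mat_adjoint \<sigma> = \<sigma>"
    and P: "P \<in> carrier_mat n n" and Q: "Q \<in> carrier_mat n n" and J: "J \<in> carrier_mat n n"
    and PQ: "P * Q = 1\<^sub>m n" and QP: "Q * P = 1\<^sub>m n" and sig: "\<sigma> = P * J * Q"
    and Jd: "\<And>i j. i < n \<Longrightarrow> j < n \<Longrightarrow> i \<noteq> j \<Longrightarrow> J $$ (i, j) = 0"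
begin

abbreviation "E s \<equiv> P * Dm n J s * Q"
abbreviation "SS \<equiv> (\<lambda>i. J $$ (i, i)) ` {..<n}"

lemma E_carrier: "E s \<in> carrier_mat n n" by (meson mult_carrier_mat Dm_carrier P Q)

lemma E_entry: "i < n \<Longrightarrow> j < n \<Longrightarrow>
  E s $$ (i, j) = (\<Sum>a<n. if J $$ (a, a) = s then P $$ (i, a) * Q $$ (a, j) else 0)"
  by (subst tri_entry[OF P _ Q]) (auto simp: Dm_def intro!: sum.cong)

lemma sig_entry: "i < n \<Longrightarrow> j < n \<Longrightarrow>
  \<sigma> $$ (i, j) = (\<Sum>a<n. J $$ (a, a) * (P $$ (i, a) * Q $$ (a, j)))"
  unfolding sig by (subst tri_entry[OF P J Q]) (auto simp: Jd intro!: sum.cong)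

lemma sumE: assumes "i < n" "j < n" shows "(\<Sum>s\<in>SS. E s $$ (i, j)) = (if i = j then 1 else 0)"
proof -
  have "(\<Sum>s\<in>SS. E s $$ (i, j)) = (\<Sum>s\<in>SS. \<Sum>a<n. if J $$ (a, a) = s then P $$ (i, a) * Q $$ (a, j) else 0)"
    using assms by (intro sum.cong) (auto simp: E_entry)
  also have "\<dots> = (\<Sum>a<n. \<Sum>s\<in>SS. if J $$ (a, a) = s then P $$ (i, a) * Q $$ (a, j) else 0)"
    by (rule sum.swap)
  also have "\<dots> = (\<Sum>a<n. P $$ (i, a) * Q $$ (a, j))"
    by (intro sum.cong refl) (simp add: sum.delta')
  also have "\<dots> = (P * Q) $$ (i, j)" using assms P Q by (intro mult_entry[symmetric]) auto
  finally show ?thesis using PQ assms by simp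
qed

lemma sumsE: assumes "i < n" "j < n" shows "(\<Sum>s\<in>SS. s * E s $$ (i, j)) = \<sigma> $$ (i, j)"
proof -
  have "(\<Sum>s\<in>SS. s * E s $$ (i, j)) = (\<Sum>s\<in>SS. \<Sum>a<n. if J $$ (a, a) = s then J $$ (a, a) * (P $$ (i, a) * Q $$ (a, j)) else 0)"
    using assms by (intro sum.cong) (auto simp: E_entry sum_distrib_left intro!: sum.cong)
  also have "\<dots> = (\<Sum>a<n. \<Sum>s\<in>SS. if J $$ (a, a) = s then J $$ (a, a) * (P $$ (i, a) * Q $$ (a, j)) else 0)"
    by (rule sum.swap)
  also have "\<dots> = (\<Sum>a<n. J $$ (a, a) * (P $$ (i, a) * Q $$ (a, j)))"
    by (intro sum.cong refl) (simp add: sum.delta')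
  finally show ?thesis using sig_entry assms by simp
qed

lemma vec_decomp: assumes v: "v \<in> carrier_vec n" and i: "i < n"
  shows "v $ i = (\<Sum>t\<in>SS. (E t *\<^sub>v v) $ i)"
proof -
  have "(\<Sum>t\<in>SS. (E t *\<^sub>v v) $ i) = (\<Sum>t\<in>SS. \<Sum>c<n. E t $$ (i, c) * v $ c)"
    using E_carrier v i by (intro sum.cong refl mv_entry) auto
  also have "\<dots> = (\<Sum>c<n. (\<Sum>t\<in>SS. E t $$ (i, c)) * v $ c)"
    by (subst sum.swap) (simp add: sum_distrib_right)
  also have "\<dots> = (\<Sum>c<n. if c = i then v $ c else 0)"
    using i by (intro sum.cong refl) (auto simp: sumE)
  also have "\<dots> = v $ i" using i by simp
  finally show ?thesis by simp
qed

lemma JD: "J * Dm n J s = s \<cdot>\<^sub>m Dm n J s" "Dm n J s * J = s \<cdot>\<^sub>m Dm n J s"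
  "Dm n J s * Dm n J s = Dm n J s"
proof -
  show "J * Dm n J s = s \<cdot>\<^sub>m Dm n J s"
  proof (rule eq_matI)
    fix i j assume "i < dim_row (s \<cdot>\<^sub>m Dm n J s)" "j < dim_col (s \<cdot>\<^sub>m Dm n J s)"
    hence ij: "i < n" "j < n" by (auto simp: Dm_def)
    have "(J * Dm n J s) $$ (i, j) = (\<Sum>c<n. J $$ (i, c) * Dm n J s $$ (c, j))"
      using ij J by (intro mult_entry[of _ n n _ n]) auto
    also have "\<dots> = (\<Sum>c<n. if c = j then J $$ (i, c) * Dm n J s $$ (c, j) else 0)"
      using ij by (intro sum.cong) (auto simp: Dm_def)
    also have "\<dots> = J $$ (i, j) * Dm n J s $$ (j, j)" using ij by simp
    finally show "(J * Dm n J s) $$ (i, j) = (s \<cdot>\<^sub>m Dm n J s) $$ (i, j)"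
      using ij Jd[of i j] by (auto simp: Dm_def)
  qed (use J in \<open>auto simp: Dm_def\<close>)
  show "Dm n J s * J = s \<cdot>\<^sub>m Dm n J s"
  proof (rule eq_matI)
    fix i j assume "i < dim_row (s \<cdot>\<^sub>m Dm n J s)" "j < dim_col (s \<cdot>\<^sub>m Dm n J s)"
    hence ij: "i < n" "j < n" by (auto simp: Dm_def)
    have "(Dm n J s * J) $$ (i, j) = (\<Sum>c<n. Dm n J s $$ (i, c) * J $$ (c, j))"
      using ij J by (intro mult_entry[of _ n n _ n]) auto
    also have "\<dots> = (\<Sum>c<n. if c = i then Dm n J s $$ (i, c) * J $$ (c, j) else 0)"
      using ij by (intro sum.cong) (auto simp: Dm_def)
    also have "\<dots> = Dm n J s $$ (i, i) * J $$ (i, j)" using ij by simp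
    finally show "(Dm n J s * J) $$ (i, j) = (s \<cdot>\<^sub>m Dm n J s) $$ (i, j)"
      using ij Jd[of i j] by (auto simp: Dm_def)
  qed (use J in \<open>auto simp: Dm_def\<close>)
  show "Dm n J s * Dm n J s = Dm n J s"
  proof (rule eq_matI)
    fix i j assume "i < dim_row (Dm n J s)" "j < dim_col (Dm n J s)"
    hence ij: "i < n" "j < n" by (auto simp: Dm_def)
    have "(Dm n J s * Dm n J s) $$ (i, j) = (\<Sum>c<n. Dm n J s $$ (i, c) * Dm n J s $$ (c, j))"
      using ij by (intro mult_entry[of _ n n _ n]) auto
    also have "\<dots> = (\<Sum>c<n. if c = i then Dm n J s $$ (i, c) * Dm n J s $$ (c, j) else 0)"
      using ij by (intro sum.cong) (auto simp: Dm_def)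
    also have "\<dots> = Dm n J s $$ (i, i) * Dm n J s $$ (i, j)" using ij by simp
    finally show "(Dm n J s * Dm n J s) $$ (i, j) = Dm n J s $$ (i, j)"
      using ij by (auto simp: Dm_def)
  qed (auto simp: Dm_def)
qed

lemma sigE: "\<sigma> * E s = s \<cdot>\<^sub>m E s" "E s * \<sigma> = s \<cdot>\<^sub>m E s" "E s * E s = E s"
proof -
  have "\<sigma> * E s = P * (J * Dm n J s) * Q" unfolding sig by (rule tri_mult[OF P Q J Dm_carrier QP])
  also have "\<dots> = s \<cdot>\<^sub>m E s" using P Q
    by (simp add: JD mult_smult_distrib[of _ n n _ n] mult_smult_assoc_mat[of _ n n _ n])
  finally show "\<sigma> * E s = s \<cdot>\<^sub>m E s" .
  have "E s * \<sigma> = P * (Dm n J s * J) * Q" unfolding sig by (rule tri_mult[OF P Q Dm_carrier J QP])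
  also have "\<dots> = s \<cdot>\<^sub>m E s" using P Q
    by (simp add: JD mult_smult_distrib[of _ n n _ n] mult_smult_assoc_mat[of _ n n _ n])
  finally show "E s * \<sigma> = s \<cdot>\<^sub>m E s" .
  have "E s * E s = P * (Dm n J s * Dm n J s) * Q" by (rule tri_mult[OF P Q Dm_carrier Dm_carrier QP])
  then show "E s * E s = E s" by (simp add: JD)
qed

lemma sigP: "\<sigma> * P = P * J"
proof -
  have "\<sigma> * P = P * J * (Q * P)" unfolding sig using P Q J by (intro assoc_mult_mat[of _ n n _ n _ n]) auto
  then show ?thesis using QP P J by simp
qed

lemma col_ev: assumes j: "j < n"
  shows "\<sigma> *\<^sub>v col P j = J $$ (j, j) \<cdot>\<^sub>v col P j" "col P j \<in> carrier_vec n" "col P j \<noteq> 0\<^sub>v n"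
proof -
  show "col P j \<in> carrier_vec n" using P unfolding carrier_vec_def by simp
  show "\<sigma> *\<^sub>v col P j = J $$ (j, j) \<cdot>\<^sub>v col P j"
  proof (rule eq_vecI)
    fix i assume "i < dim_vec (J $$ (j, j) \<cdot>\<^sub>v col P j)"
    hence i: "i < n" using P by simp
    have "(\<sigma> *\<^sub>v col P j) $ i = (\<sigma> * P) $$ (i, j)" using i j S P by simp
    also have "\<dots> = (P * J) $$ (i, j)" by (simp add: sigP)
    also have "\<dots> = (\<Sum>c<n. P $$ (i, c) * J $$ (c, j))" using i j P J by (intro mult_entry) auto
    also have "\<dots> = (\<Sum>c<n. if c = j then P $$ (i, c) * J $$ (c, j) else 0)"
      using j Jd by (intro sum.cong) auto
    also have "\<dots> = P $$ (i, j) * J $$ (j, j)" using j by simp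
    finally show "(\<sigma> *\<^sub>v col P j) $ i = (J $$ (j, j) \<cdot>\<^sub>v col P j) $ i" using i j P by simp
  qed (use S P in auto)
  show "col P j \<noteq> 0\<^sub>v n"
  proof
    assume c0: "col P j = 0\<^sub>v n"
    have "(Q * P) $$ (j, j) = row Q j \<bullet> col P j" using j P Q by simp
    also have "\<dots> = 0" unfolding c0 using Q j by simp
    finally show False using QP j by simp
  qed
qed

lemma SS_ev: "s \<in> SS \<Longrightarrow> is_eigenvalue n \<sigma> s"
  using col_ev unfolding is_eigenvalue_def by blast

lemma SS_real: "s \<in> SS \<Longrightarrow> conjugate s = s"
  using col_ev herm_real_ev[OF S H] by blast

lemma smult_cancel_mat: fixes M :: "complex mat" assumes "M \<in> carrier_mat n n" "s \<cdot>\<^sub>m M = t \<cdot>\<^sub>m M" "s \<noteq> t"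
  shows "M = 0\<^sub>m n n"
proof (rule eq_matI)
  fix i j assume "i < dim_row (0\<^sub>m n n :: complex mat)" "j < dim_col (0\<^sub>m n n :: complex mat)"
  hence ij: "i < n" "j < n" by auto
  have "s * M $$ (i, j) = t * M $$ (i, j)" using arg_cong[OF assms(2), of "\<lambda>A. A $$ (i, j)"] ij assms(1) by auto
  hence "(s - t) * M $$ (i, j) = 0" by (simp add: algebra_simps)
  then show "M $$ (i, j) = 0\<^sub>m n n $$ (i, j)" using assms(3) ij by simp
qed (use assms in auto)

lemma E_herm: assumes s: "s \<in> SS" shows "mat_adjoint (E s) = E s"
proof -
  define X where "X = mat_adjoint (E s)"
  have X: "X \<in> carrier_mat n n" using E_carrier by (simp add: X_def)
  have Xs: "X * \<sigma> = s \<cdot>\<^sub>m X"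
  proof -
    have "mat_adjoint (\<sigma> * E s) = X * \<sigma>" unfolding X_def using adj_mult[OF S E_carrier] H by simp
    moreover have "mat_adjoint (\<sigma> * E s) = s \<cdot>\<^sub>m X" unfolding sigE X_def adj_smult using SS_real[OF s] by simp
    ultimately show ?thesis by simp
  qed
  have XE: "X * E t = 0\<^sub>m n n" if t: "t \<in> SS" "t \<noteq> s" for t
  proof -
    have "(X * \<sigma>) * E t = X * (\<sigma> * E t)" using X S E_carrier by (intro assoc_mult_mat[of _ n n _ n _ n]) auto
    hence "s \<cdot>\<^sub>m (X * E t) = t \<cdot>\<^sub>m (X * E t)"
      unfolding Xs sigE using X E_carrier
      by (simp add: mult_smult_distrib[of _ n n _ n] mult_smult_assoc_mat[of _ n n _ n])
    then show ?thesis using t X E_carrier by (intro smult_cancel_mat) auto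
  qed
  have XX: "X = X * E s"
  proof (rule eq_matI)
    fix i j assume "i < dim_row (X * E s)" "j < dim_col (X * E s)"
    hence ij: "i < n" "j < n" using X E_carrier[of s] by auto
    have "(\<Sum>t\<in>SS. (X * E t) $$ (i, j)) = (\<Sum>t\<in>SS. \<Sum>c<n. X $$ (i, c) * E t $$ (c, j))"
      using ij X E_carrier by (intro sum.cong refl mult_entry) auto
    also have "\<dots> = (\<Sum>c<n. X $$ (i, c) * (\<Sum>t\<in>SS. E t $$ (c, j)))"
      by (subst sum.swap) (simp add: sum_distrib_left)
    also have "\<dots> = (\<Sum>c<n. if c = j then X $$ (i, c) else 0)"
      using ij by (intro sum.cong refl) (auto simp: sumE)
    also have "\<dots> = X $$ (i, j)" using ij by simp
    finally have 1: "X $$ (i, j) = (\<Sum>t\<in>SS. (X * E t) $$ (i, j))" by simp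
    also have "\<dots> = (\<Sum>t\<in>SS. if t = s then (X * E s) $$ (i, j) else 0)"
      using XE ij by (intro sum.cong refl) auto
    also have "\<dots> = (X * E s) $$ (i, j)" using s by simp
    finally show "X $$ (i, j) = (X * E s) $$ (i, j)" .
  qed (use X E_carrier Q in auto)
  have "E s = mat_adjoint X" unfolding X_def by (simp add: adj_adj)
  also have "\<dots> = mat_adjoint (X * E s)" using XX by simp
  also have "\<dots> = mat_adjoint (E s) * mat_adjoint X" using adj_mult[OF X E_carrier] by simp
  also have "\<dots> = X * E s" unfolding X_def by (simp add: adj_adj)
  also have "\<dots> = X" using XX by simp
  finally show ?thesis unfolding X_def by simp
qed

lemma Ev0: assumes v: "v \<in> carrier_vec n" and ev: "\<sigma> *\<^sub>v v = s \<cdot>\<^sub>v v" and ts: "t \<noteq> s"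
  shows "E t *\<^sub>v v = 0\<^sub>v n"
proof -
  define w where "w = E t *\<^sub>v v"
  have w: "w \<in> carrier_vec n" using E_carrier[of t] v by (simp add: w_def)
  have "E t *\<^sub>v (\<sigma> *\<^sub>v v) = (E t * \<sigma>) *\<^sub>v v" using E_carrier S v by (intro assoc_mult_mat_vec[symmetric]) auto
  also have "\<dots> = t \<cdot>\<^sub>v w" unfolding sigE w_def using E_carrier v by (intro smult_mat_vec) auto
  finally have 1: "E t *\<^sub>v (\<sigma> *\<^sub>v v) = t \<cdot>\<^sub>v w" .
  have 2: "E t *\<^sub>v (\<sigma> *\<^sub>v v) = s \<cdot>\<^sub>v w" unfolding ev w_def using E_carrier v by (intro mult_mat_vec) auto
  show ?thesis unfolding w_def[symmetric]
  proof (rule eq_vecI)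
    fix i assume "i < dim_vec (0\<^sub>v n :: complex vec)"
    hence i: "i < n" by simp
    have "t * w $ i = s * w $ i" using arg_cong[OF trans[OF 1[symmetric] 2], of "\<lambda>x. x $ i"] i w by simp
    hence "(t - s) * w $ i = 0" by (simp add: algebra_simps)
    then show "w $ i = 0\<^sub>v n $ i" using ts i by simp
  qed (use w in auto)
qed

lemma spec: assumes s: "s \<in> SS" shows "spectral_proj n \<sigma> s (E s)"
  unfolding spectral_proj_def
proof (intro conjI ballI)
  show "is_eigenvalue n \<sigma> s" using SS_ev[OF s] .
  show "self_adjoint n (E s)" unfolding self_adjoint_def using E_carrier E_herm[OF s] by simp
  show "E s * E s = E s" by (rule sigE)
  fix v :: "complex vec" assume v: "v \<in> carrier_vec n"
  show "(E s *\<^sub>v v = v) = (\<sigma> *\<^sub>v v = s \<cdot>\<^sub>v v)"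
  proof
    assume Ev: "E s *\<^sub>v v = v"
    have "\<sigma> *\<^sub>v v = \<sigma> *\<^sub>v (E s *\<^sub>v v)" using Ev by simp
    also have "\<dots> = (\<sigma> * E s) *\<^sub>v v" using S E_carrier v by (intro assoc_mult_mat_vec[symmetric]) auto
    also have "\<dots> = s \<cdot>\<^sub>v (E s *\<^sub>v v)" unfolding sigE using E_carrier v by (intro smult_mat_vec) auto
    finally show "\<sigma> *\<^sub>v v = s \<cdot>\<^sub>v v" using Ev by simp
  next
    assume ev: "\<sigma> *\<^sub>v v = s \<cdot>\<^sub>v v"
    show "E s *\<^sub>v v = v"
    proof (rule eq_vecI)
      fix i assume "i < dim_vec v"
      hence i: "i < n" using v by simp
      have "v $ i = (\<Sum>t\<in>SS. (E t *\<^sub>v v) $ i)" by (rule vec_decomp[OF v i])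
      also have "\<dots> = (\<Sum>t\<in>SS. if t = s then (E s *\<^sub>v v) $ i else 0)"
        using Ev0[OF v ev] i by (intro sum.cong refl) auto
      also have "\<dots> = (E s *\<^sub>v v) $ i" using s by simp
      finally show "(E s *\<^sub>v v) $ i = v $ i" by simp
    qed (use E_carrier v P in auto)
  qed
qed

lemma ev_SS: assumes "is_eigenvalue n \<sigma> s" shows "s \<in> SS"
proof (rule ccontr)
  assume ns: "s \<notin> SS"
  obtain v where v: "v \<in> carrier_vec n" "v \<noteq> 0\<^sub>v n" "\<sigma> *\<^sub>v v = s \<cdot>\<^sub>v v"
    using assms unfolding is_eigenvalue_def by blast
  have "v = 0\<^sub>v n"
  proof (rule eq_vecI)
    fix i assume "i < dim_vec (0\<^sub>v n :: complex vec)"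
    hence i: "i < n" by simp
    have "v $ i = (\<Sum>t\<in>SS. (E t *\<^sub>v v) $ i)" by (rule vec_decomp[OF v(1) i])
    also have "\<dots> = 0"
    proof (intro sum.neutral ballI)
      fix t assume "t \<in> SS"
      hence "t \<noteq> s" using ns by auto
      then show "(E t *\<^sub>v v) $ i = 0" using Ev0[OF v(1) v(3)] i by simp
    qed
    finally show "v $ i = 0\<^sub>v n $ i" using i by simp
  qed (use v in auto)
  then show False using v by simp
qed

lemma rank_one: assumes nd: "nondegenerate n \<sigma>" and s: "s \<in> SS"
  shows "\<exists>p q. \<forall>i<n. \<forall>j<n. E s $$ (i, j) = p i * q j"
proof -
  have "{s. is_eigenvalue n \<sigma> s} = SS" using ev_SS SS_ev by blast
  hence "card SS = card {..<n}" using nd unfolding nondegenerate_def by simp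
  hence inj: "inj_on (\<lambda>i. J $$ (i, i)) {..<n}" by (intro eq_card_imp_inj_on) auto
  obtain j0 where j0: "j0 < n" "s = J $$ (j0, j0)" using s by auto
  have "E s $$ (i, j) = P $$ (i, j0) * Q $$ (j0, j)" if ij: "i < n" "j < n" for i j
  proof -
    have "E s $$ (i, j) = (\<Sum>a<n. if J $$ (a, a) = s then P $$ (i, a) * Q $$ (a, j) else 0)"
      using ij by (rule E_entry)
    also have "\<dots> = (\<Sum>a<n. if a = j0 then P $$ (i, a) * Q $$ (a, j) else 0)"
      using inj j0 by (intro sum.cong refl) (auto dest: inj_onD)
    also have "\<dots> = P $$ (i, j0) * Q $$ (j0, j)" using j0 by simp
    finally show ?thesis .
  qed
  then show ?thesis by (intro exI[of _ "\<lambda>i. P $$ (i, j0)"] exI[of _ "\<lambda>j. Q $$ (j0, j)"]) auto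
qed

end

lemma spectral: fixes \<sigma> :: "complex mat" assumes sa: "self_adjoint n \<sigma>"
  obtains SS :: "complex set" and E where "finite SS"
    "\<And>s. s \<in> SS \<Longrightarrow> spectral_proj n \<sigma> s (E s)"
    "\<And>s. E s \<in> carrier_mat n n"
    "\<And>i j. i < n \<Longrightarrow> j < n \<Longrightarrow> (\<Sum>s\<in>SS. s * E s $$ (i, j)) = \<sigma> $$ (i, j)"
    "\<And>i j. i < n \<Longrightarrow> j < n \<Longrightarrow> (\<Sum>s\<in>SS. E s $$ (i, j)) = (if i = j then 1 else 0)"
    "nondegenerate n \<sigma> \<Longrightarrow> \<forall>s\<in>SS. \<exists>p q. \<forall>i<n. \<forall>j<n. E s $$ (i, j) = p i * q j"
proof -
  have S: "\<sigma> \<in> carrier_mat n n" and H: "mat_adjoint \<sigma> = \<sigma>" using sa unfolding self_adjoint_def by auto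
  obtain P Q J where PQJ: "P \<in> carrier_mat n n" "Q \<in> carrier_mat n n" "J \<in> carrier_mat n n"
    "P * Q = 1\<^sub>m n" "Q * P = 1\<^sub>m n" "\<sigma> = P * J * Q"
    "\<And>i j. i < n \<Longrightarrow> j < n \<Longrightarrow> i \<noteq> j \<Longrightarrow> J $$ (i, j) = 0"
    using herm_diag[OF S H] by blast
  show ?thesis
    apply (rule that[of "(\<lambda>i. J $$ (i, i)) ` {..<n}" "\<lambda>s. P * Dm n J s * Q"])
    using spec[OF S H PQJ] E_carrier[OF S H PQJ] sumsE[OF S H PQJ] sumE[OF S H PQJ] rank_one[OF S H PQJ]
    by auto
qed

lemma mtrace_mult: assumes "A \<in> carrier_mat N N" "B \<in> carrier_mat N N"
  shows "mtrace (A * B) = (\<Sum>a<N. \<Sum>b<N. A $$ (a, b) * B $$ (b, a))"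
proof -
  have "mtrace (A * B) = (\<Sum>a<N. (A * B) $$ (a, a))" unfolding mtrace_def using assms by simp
  also have "\<dots> = (\<Sum>a<N. \<Sum>b<N. A $$ (a, b) * B $$ (b, a))"
    using assms by (intro sum.cong refl mult_entry) auto
  finally show ?thesis .
qed

lemma trace_emb: assumes "\<rho> \<in> carrier_mat (n^m) (n^m)"
  shows "mtrace (emb n m k X * \<rho>) =
    (\<Sum>a<n^m. \<Sum>b<n^m. if agree n m {k} a b then X $$ (dig n k a, dig n k b) * \<rho> $$ (b, a) else 0)"
  using assms by (simp add: mtrace_mult[OF emb_carrier] emb_index)
    (intro sum.cong refl, auto)

lemma emb_comm: assumes "0 < n" "k < m" "l < m" "A \<in> carrier_mat n n"
  shows "emb n m k A * emb n m l A = emb n m l A * emb n m k A"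
proof (cases "k = l")
  case True
  then show ?thesis using emb_mult_same assms by simp
next
  case False
  then show ?thesis using emb_mult_diff assms emb2_comm by metis
qed

lemma part_a: assumes st: "setting n m \<sigma> \<rho>" and smc: "SMC n m \<sigma> \<rho>" shows "EC n m \<sigma> \<rho>"
proof -
  have n: "0 < n" and sa: "self_adjoint n \<sigma>" and dens: "density_op (n^m) \<rho>"
    using st unfolding setting_def by auto
  have rho: "\<rho> \<in> carrier_mat (n^m) (n^m)" using dens unfolding density_op_def self_adjoint_def by auto
  obtain SS :: "complex set" and E where fin: "finite SS"
    and sp: "\<And>s. s \<in> SS \<Longrightarrow> spectral_proj n \<sigma> s (E s)"
    and Ec: "\<And>s. E s \<in> carrier_mat n n"
    and dec: "\<And>i j. i < n \<Longrightarrow> j < n \<Longrightarrow> (\<Sum>s\<in>SS. s * E s $$ (i, j)) = \<sigma> $$ (i, j)"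
    and "\<And>i j. i < n \<Longrightarrow> j < n \<Longrightarrow> (\<Sum>s\<in>SS. E s $$ (i, j)) = (if i = j then 1 else 0)"
    and "nondegenerate n \<sigma> \<Longrightarrow> \<forall>s\<in>SS. \<exists>p q. \<forall>i<n. \<forall>j<n. E s $$ (i, j) = p i * q j"
    by (rule spectral[OF sa]) blast
  have lin: "mtrace (emb n m k \<sigma> * \<rho>) = (\<Sum>s\<in>SS. s * mtrace (emb n m k (E s) * \<rho>))" for k
  proof -
    have "mtrace (emb n m k \<sigma> * \<rho>) =
      (\<Sum>a<n^m. \<Sum>b<n^m. if agree n m {k} a b then \<sigma> $$ (dig n k a, dig n k b) * \<rho> $$ (b, a) else 0)"
      by (rule trace_emb[OF rho])
    also have "\<dots> = (\<Sum>a<n^m. \<Sum>b<n^m. \<Sum>s\<in>SS. s * (if agree n m {k} a b then E s $$ (dig n k a, dig n k b) * \<rho> $$ (b, a) else 0))"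
      using n by (intro sum.cong refl) (auto simp: dec[symmetric] dig_lt sum_distrib_right mult.assoc)
    also have "\<dots> = (\<Sum>s\<in>SS. \<Sum>a<n^m. \<Sum>b<n^m. s * (if agree n m {k} a b then E s $$ (dig n k a, dig n k b) * \<rho> $$ (b, a) else 0))"
      by (simp add: sum.swap[of _ SS])
    also have "\<dots> = (\<Sum>s\<in>SS. s * mtrace (emb n m k (E s) * \<rho>))"
      by (simp add: trace_emb[OF rho] sum_distrib_left)
    finally show ?thesis .
  qed
  have eq: "mtrace (emb n m k (E s) * \<rho>) = mtrace (emb n m l (E s) * \<rho>)" if "s \<in> SS" "k < m" "l < m" for s k l
  proof -
    note h = smc[unfolded SMC_def, rule_format, OF sp[OF that(1)]]
    have 1: "mtrace (emb n m k (E s) * emb n m l (E s) * \<rho>) = mtrace (emb n m l (E s) * \<rho>)"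
      by (rule h[OF that(2,3)])
    have 2: "mtrace (emb n m l (E s) * emb n m k (E s) * \<rho>) = mtrace (emb n m k (E s) * \<rho>)"
      by (rule h[OF that(3,2)])
    have 3: "emb n m k (E s) * emb n m l (E s) = emb n m l (E s) * emb n m k (E s)"
      using emb_comm[OF n that(2,3) Ec] .
    have "mtrace (emb n m k (E s) * \<rho>) = mtrace (emb n m l (E s) * emb n m k (E s) * \<rho>)" by (rule 2[symmetric])
    also have "\<dots> = mtrace (emb n m k (E s) * emb n m l (E s) * \<rho>)" by (simp only: 3)
    also have "\<dots> = mtrace (emb n m l (E s) * \<rho>)" by (rule 1)
    finally show ?thesis .
  qed
  show ?thesis unfolding EC_def
  proof (intro allI impI)
    fix k l assume kl: "k < m" "l < m"
    show "mtrace (emb n m k \<sigma> * \<rho>) = mtrace (emb n m l \<sigma> * \<rho>)"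
    proof -
      have "mtrace (emb n m k \<sigma> * \<rho>) = (\<Sum>s\<in>SS. s * mtrace (emb n m k (E s) * \<rho>))" by (rule lin)
      also have "\<dots> = (\<Sum>s\<in>SS. s * mtrace (emb n m l (E s) * \<rho>))"
        by (rule sum.cong[OF refl]) (simp only: eq[OF _ kl])
      also have "\<dots> = mtrace (emb n m l \<sigma> * \<rho>)" by (rule lin[symmetric])
      finally show ?thesis .
    qed
  qed
qed

definition psd :: "nat \<Rightarrow> complex mat \<Rightarrow> bool" where
  "psd N \<rho> \<longleftrightarrow> (\<forall>v \<in> carrier_vec N. Im (conjugate v \<bullet> (\<rho> *\<^sub>v v)) = 0 \<and> Re (conjugate v \<bullet> (\<rho> *\<^sub>v v)) \<ge> 0)"

lemma sq_real: fixes w :: "complex vec" assumes "w \<in> carrier_vec N"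
  shows "Im (conjugate w \<bullet> w) = 0" "Re (conjugate w \<bullet> w) \<ge> 0"
proof -
  have "w \<bullet>c w = conjugate w \<bullet> w" by (rule conjugate_vec_sprod_comm[OF assms assms])
  moreover have "w \<bullet>c w \<ge> 0" by (rule conjugate_square_ge_0_vec)
  ultimately have "conjugate w \<bullet> w \<ge> 0" by simp
  then show "Im (conjugate w \<bullet> w) = 0" "Re (conjugate w \<bullet> w) \<ge> 0" by (auto simp: less_eq_complex_def)
qed

lemma psd_zero: fixes \<rho> :: "complex mat"
  assumes R: "\<rho> \<in> carrier_mat N N" and H: "mat_adjoint \<rho> = \<rho>" and P: "psd N \<rho>"
    and v: "v \<in> carrier_vec N" and z: "conjugate v \<bullet> (\<rho> *\<^sub>v v) = 0"
  shows "\<rho> *\<^sub>v v = 0\<^sub>v N"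
proof -
  define w where "w = \<rho> *\<^sub>v v"
  have w: "w \<in> carrier_vec N" using R v by (simp add: w_def)
  have rw: "\<rho> *\<^sub>v w \<in> carrier_vec N" using R w by simp
  define c where "c = conjugate w \<bullet> w"
  define \<alpha> where "\<alpha> = conjugate w \<bullet> (\<rho> *\<^sub>v w)"
  have vw: "conjugate v \<bullet> (\<rho> *\<^sub>v w) = c"
    using adj_sprod[OF R v w] H unfolding c_def w_def by simp
  have c: "Im c = 0" "Re c \<ge> 0" using sq_real[OF w] by (auto simp: c_def)
  have al: "Im \<alpha> = 0" "Re \<alpha> \<ge> 0" using P w unfolding psd_def \<alpha>_def by auto
  have q: "conjugate (v + (- of_real r) \<cdot>\<^sub>v w) \<bullet> (\<rho> *\<^sub>v (v + (- of_real r) \<cdot>\<^sub>v w)) =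
    (- of_real r) * c + (- of_real r) * c + (of_real r * of_real r) * \<alpha>" for r :: real
  proof -
    have 1: "\<rho> *\<^sub>v (v + (- of_real r) \<cdot>\<^sub>v w) = w + (- of_real r) \<cdot>\<^sub>v (\<rho> *\<^sub>v w)"
      using R v w by (simp add: mult_add_distrib_mat_vec[OF R] mult_mat_vec[OF R] w_def)
    have 2: "conjugate (v + (- of_real r) \<cdot>\<^sub>v w) = conjugate v + (- of_real r) \<cdot>\<^sub>v conjugate w"
      using v w by (simp add: conjugate_add_vec conjugate_smult_vec)
    have cv: "conjugate v \<in> carrier_vec N" "conjugate w \<in> carrier_vec N" using v w by auto
    have sw: "(- complex_of_real r) \<cdot>\<^sub>v conjugate w \<in> carrier_vec N" "(- complex_of_real r) \<cdot>\<^sub>v (\<rho> *\<^sub>v w) \<in> carrier_vec N"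
      using w rw by auto
    have "(conjugate v + (- of_real r) \<cdot>\<^sub>v conjugate w) \<bullet> (w + (- of_real r) \<cdot>\<^sub>v (\<rho> *\<^sub>v w))
      = conjugate v \<bullet> w + conjugate v \<bullet> ((- of_real r) \<cdot>\<^sub>v (\<rho> *\<^sub>v w))
        + (((- of_real r) \<cdot>\<^sub>v conjugate w) \<bullet> w + ((- of_real r) \<cdot>\<^sub>v conjugate w) \<bullet> ((- of_real r) \<cdot>\<^sub>v (\<rho> *\<^sub>v w)))"
      using cv sw w rw
      by (simp add: add_scalar_prod_distrib[of _ N] scalar_prod_add_distrib[of _ N])
    also have "((- of_real r) \<cdot>\<^sub>v conjugate w) \<bullet> ((- of_real r) \<cdot>\<^sub>v (\<rho> *\<^sub>v w)) = (- of_real r) * ((- of_real r) * \<alpha>)"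
      unfolding smult_scalar_prod_distrib[OF cv(2) sw(2)] scalar_prod_smult_distrib[OF cv(2) rw] \<alpha>_def ..
    also have "((- of_real r) \<cdot>\<^sub>v conjugate w) \<bullet> w = (- of_real r) * c"
      unfolding smult_scalar_prod_distrib[OF cv(2) w] c_def ..
    also have "conjugate v \<bullet> ((- of_real r) \<cdot>\<^sub>v (\<rho> *\<^sub>v w)) = (- of_real r) * c"
      unfolding scalar_prod_smult_distrib[OF cv(1) rw] vw ..
    also have "conjugate v \<bullet> w = 0" using z unfolding w_def .
    also have "0 + (- of_real r) * c + ((- of_real r) * c + (- of_real r) * ((- of_real r) * \<alpha>)) =
       (- of_real r) * c + (- of_real r) * c + (of_real r * of_real r) * \<alpha>" by (simp add: algebra_simps)
    finally show ?thesis unfolding 1 2 .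
  qed
  have "Re c = 0"
  proof (rule ccontr)
    assume "Re c \<noteq> 0"
    hence cp: "Re c > 0" using c by simp
    define r where "r = Re c / (Re \<alpha> + 1)"
    have "Re (conjugate (v + (- of_real r) \<cdot>\<^sub>v w) \<bullet> (\<rho> *\<^sub>v (v + (- of_real r) \<cdot>\<^sub>v w))) \<ge> 0"
      using P v w unfolding psd_def by auto
    hence "- 2 * r * Re c + r * r * Re \<alpha> \<ge> 0" unfolding q using c al by (simp add: algebra_simps)
    moreover have "- 2 * r * Re c + r * r * Re \<alpha> = - ((Re c * Re c) * (Re \<alpha> + 2) / ((Re \<alpha> + 1) * (Re \<alpha> + 1)))"
      using al unfolding r_def by (simp add: field_simps add_pos_nonneg[of 1, THEN less_imp_neq, symmetric] add.commute)
    moreover have "(Re c * Re c) * (Re \<alpha> + 2) / ((Re \<alpha> + 1) * (Re \<alpha> + 1)) > 0" using cp al by simp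
    ultimately show False by linarith
  qed
  hence "c = 0" using c by (simp add: complex_eq_iff)
  then show ?thesis using sq_zero[OF w] unfolding c_def w_def by simp
qed

lemma mtrace_comm: assumes "A \<in> carrier_mat N N" "B \<in> carrier_mat N N"
  shows "mtrace (A * B) = mtrace (B * A)"
  unfolding mtrace_mult[OF assms] mtrace_mult[OF assms(2,1)]
  by (subst sum.swap) (simp add: mult.commute)

lemma proj_trace_zero: fixes E \<rho> :: "complex mat"
  assumes R: "\<rho> \<in> carrier_mat N N" and H: "mat_adjoint \<rho> = \<rho>" and P: "psd N \<rho>"
    and Ec: "E \<in> carrier_mat N N" and EH: "mat_adjoint E = E" and EE: "E * E = E"
    and tr: "mtrace (E * \<rho>) = 0"
  shows "E * \<rho> = 0\<^sub>m N N"
proof -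
  define q where "q i = conjugate (col E i) \<bullet> (\<rho> *\<^sub>v col E i)" for i
  have colc: "col E i \<in> carrier_vec N" for i using Ec unfolding carrier_vec_def by simp
  have Eij: "cnj (E $$ (j, i)) = E $$ (i, j)" if "i < N" "j < N" for i j
    using adj_index[of i E j] that Ec EH by auto
  have "mtrace (E * \<rho>) = mtrace ((E * E) * \<rho>)" using EE by simp
  also have "\<dots> = mtrace (E * (E * \<rho>))" using Ec R by (subst assoc_mult_mat[of _ N N _ N _ N]) auto
  also have "\<dots> = mtrace ((E * \<rho>) * E)" using Ec R by (intro mtrace_comm) auto
  also have "\<dots> = mtrace (E * (\<rho> * E))" using Ec R by (subst assoc_mult_mat[of _ N N _ N _ N]) auto
  also have "\<dots> = (\<Sum>i<N. q i)"
  proof -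
    have "(E * (\<rho> * E)) $$ (i, i) = q i" if i: "i < N" for i
    proof -
      have "(E * (\<rho> * E)) $$ (i, i) = (\<Sum>j<N. E $$ (i, j) * (\<rho> * E) $$ (j, i))"
        using Ec R i by (intro mult_entry) auto
      also have "\<dots> = (\<Sum>j<N. conjugate (col E i) $ j * (\<rho> *\<^sub>v col E i) $ j)"
        using Ec R i by (intro sum.cong refl) (auto simp: Eij)
      also have "\<dots> = q i" unfolding q_def using Ec R i colc[of i]
        by (simp add: scalar_prod_def atLeast0LessThan)
      finally show ?thesis .
    qed
    then show ?thesis unfolding mtrace_def using Ec R by (auto intro!: sum.cong)
  qed
  finally have s0: "(\<Sum>i<N. q i) = 0" using tr by simp
  have qre: "Im (q i) = 0" "Re (q i) \<ge> 0" for i using P colc[of i] unfolding psd_def q_def by auto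
  have "(\<Sum>i<N. Re (q i)) = 0" using arg_cong[OF s0, of Re] by (simp add: Re_sum)
  hence "\<forall>i\<in>{..<N}. Re (q i) = 0" using qre by (subst sum_nonneg_eq_0_iff[symmetric]) auto
  hence q0: "q i = 0" if "i < N" for i using qre that by (simp add: complex_eq_iff)
  have rc: "\<rho> *\<^sub>v col E i = 0\<^sub>v N" if "i < N" for i
    using psd_zero[OF R H P colc] q0[OF that] unfolding q_def by simp
  have rE: "\<rho> * E = 0\<^sub>m N N"
  proof (rule eq_matI)
    fix j i assume "j < dim_row (0\<^sub>m N N :: complex mat)" "i < dim_col (0\<^sub>m N N :: complex mat)"
    hence ji: "j < N" "i < N" by auto
    have "(\<rho> * E) $$ (j, i) = (\<rho> *\<^sub>v col E i) $ j" using ji R Ec by simp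
    then show "(\<rho> * E) $$ (j, i) = 0\<^sub>m N N $$ (j, i)" using rc[OF ji(2)] ji by simp
  qed (use R Ec in auto)
  have "E * \<rho> = mat_adjoint E * mat_adjoint \<rho>" using EH H by simp
  also have "\<dots> = mat_adjoint (\<rho> * E)" using adj_mult[OF R Ec] by simp
  also have "\<dots> = 0\<^sub>m N N" unfolding rE by (rule eq_matI) auto
  finally show ?thesis .
qed

lemma agree_sym: "agree n m K a b = agree n m K b a"
  unfolding agree_def by auto

lemma emb2_herm: assumes "0 < n" "F \<in> carrier_mat n n" "G \<in> carrier_mat n n"
  "mat_adjoint F = F" "mat_adjoint G = G"
  shows "mat_adjoint (emb2 n m k l F G) = emb2 n m k l F G"
proof (rule eq_matI)
  fix a b assume "a < dim_row (emb2 n m k l F G)" "b < dim_col (emb2 n m k l F G)"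
  hence ab: "a < n^m" "b < n^m" by auto
  have Fc: "cnj (F $$ (y, x)) = F $$ (x, y)" if "x < n" "y < n" for x y
    using adj_index[of x F y] that assms by auto
  have Gc: "cnj (G $$ (y, x)) = G $$ (x, y)" if "x < n" "y < n" for x y
    using adj_index[of x G y] that assms by auto
  show "mat_adjoint (emb2 n m k l F G) $$ (a, b) = emb2 n m k l F G $$ (a, b)"
    using ab assms(1) by (auto simp: emb2_index agree_sym[of n m "{k, l}" b a] Fc Gc dig_lt)
qed auto

lemma emb2_idem: assumes n: "0 < n" and kl: "k < m" "l < m" "k \<noteq> l"
  and F: "F \<in> carrier_mat n n" and G: "G \<in> carrier_mat n n" and FF: "F * F = F" and GG: "G * G = G"
  shows "emb2 n m k l F G * emb2 n m k l F G = emb2 n m k l F G"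
proof -
  define X where "X = emb n m k F"
  define Y where "Y = emb n m l G"
  have X: "X \<in> carrier_mat (n^m) (n^m)" and Y: "Y \<in> carrier_mat (n^m) (n^m)" by (auto simp: X_def Y_def)
  have XY: "X * Y = emb2 n m k l F G" unfolding X_def Y_def by (rule emb_mult_diff[OF n kl F G])
  have YX: "Y * X = X * Y" unfolding XY unfolding X_def Y_def
    using emb_mult_diff[OF n kl(2,1) _ G F] kl(3) emb2_comm by metis
  have "(X * Y) * (X * Y) = X * (Y * (X * Y))" using X Y by (subst assoc_mult_mat[of _ "n^m" "n^m" _ "n^m" _ "n^m"]) auto
  also have "Y * (X * Y) = (Y * X) * Y" using X Y by (subst assoc_mult_mat[of _ "n^m" "n^m" _ "n^m" _ "n^m"]) auto
  also have "\<dots> = X * (Y * Y)" unfolding YX using X Y by (subst assoc_mult_mat[of _ "n^m" "n^m" _ "n^m" _ "n^m"]) auto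
  also have "X * (X * (Y * Y)) = (X * X) * (Y * Y)" using X Y by (subst assoc_mult_mat[of _ "n^m" "n^m" _ "n^m" _ "n^m"]) auto
  also have "\<dots> = X * Y" unfolding X_def Y_def using emb_mult_same[OF n kl(1) F F] emb_mult_same[OF n kl(2) G G] FF GG by simp
  finally show ?thesis unfolding XY .
qed

lemma compl_proj: fixes E :: "complex mat" assumes E: "E \<in> carrier_mat n n" "mat_adjoint E = E" "E * E = E"
  shows "mat_adjoint (1\<^sub>m n - E) = 1\<^sub>m n - E" "(1\<^sub>m n - E) * (1\<^sub>m n - E) = 1\<^sub>m n - E"
    "1\<^sub>m n - E \<in> carrier_mat n n"
proof -
  have Ec: "cnj (E $$ (y, x)) = E $$ (x, y)" if "x < n" "y < n" for x y
    using adj_index[of x E y] that E by auto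
  show "mat_adjoint (1\<^sub>m n - E) = 1\<^sub>m n - E"
    by (rule eq_matI) (use E in \<open>auto simp: Ec\<close>)
  show c: "1\<^sub>m n - E \<in> carrier_mat n n" using E by auto
  have "(1\<^sub>m n - E) * (1\<^sub>m n - E) = (1\<^sub>m n - E) * 1\<^sub>m n - (1\<^sub>m n - E) * E"
    using E c by (intro mult_minus_distrib_mat[of _ n n]) auto
  also have "(1\<^sub>m n - E) * E = 1\<^sub>m n * E - E * E" using E by (intro minus_mult_distrib_mat[of _ n n]) auto
  also have "\<dots> = 0\<^sub>m n n" using E by (auto intro!: eq_matI)
  also have "(1\<^sub>m n - E) * 1\<^sub>m n = 1\<^sub>m n - E" by (rule right_mult_one_mat[OF c])
  also have "(1\<^sub>m n - E) - 0\<^sub>m n n = 1\<^sub>m n - E" by (rule eq_matI) (use c E in auto)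
  finally show "(1\<^sub>m n - E) * (1\<^sub>m n - E) = 1\<^sub>m n - E" .
qed

lemma emb2_minus: assumes "A \<in> carrier_mat n n" "B \<in> carrier_mat n n" "0 < n"
  shows "emb2 n m k l (A - B) C = emb2 n m k l A C - emb2 n m k l B C"
  by (rule eq_matI) (use assms in \<open>auto simp: emb2_index dig_lt algebra_simps\<close>)

lemma perm_idx_lt: "0 < n \<Longrightarrow> perm_idx n m f a < n ^ m"
  unfolding perm_idx_enc by (rule enc_lt) (auto simp: dig_lt)

lemma dig_perm_idx: "0 < n \<Longrightarrow> j < m \<Longrightarrow> dig n j (perm_idx n m f a) = dig n (f j) a"
  unfolding perm_idx_enc by (subst dig_enc) (auto simp: dig_lt)

lemma mtrace_minus: "A \<in> carrier_mat N N \<Longrightarrow> B \<in> carrier_mat N N \<Longrightarrow> mtrace (A - B) = mtrace A - mtrace (B :: complex mat)"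
  unfolding mtrace_def by (simp add: sum_subtractf)

lemma density_parts: assumes "density_op N \<rho>"
  shows "\<rho> \<in> carrier_mat N N" "mat_adjoint \<rho> = \<rho>" "psd N \<rho>" "mtrace \<rho> = 1"
  using assms unfolding density_op_def self_adjoint_def psd_def by auto

lemma swap_inv: assumes st: "setting n m \<sigma> \<rho>" and nd: "nondegenerate n \<sigma>" and smc: "SMC n m \<sigma> \<rho>"
  and kl: "k < m" "l < m" "k \<noteq> l"
  shows "perm_conj n m (transpose k l) \<rho> = \<rho>"
proof -
  have n: "0 < n" and sa: "self_adjoint n \<sigma>" and dens: "density_op (n^m) \<rho>"
    using st unfolding setting_def by auto
  define N where "N = n ^ m"
  note dp = density_parts[OF dens, folded N_def]
  have R: "\<rho> \<in> carrier_mat N N" and H: "mat_adjoint \<rho> = \<rho>" and Ps: "psd N \<rho>" using dp by auto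
  obtain SS :: "complex set" and E where fin: "finite SS"
    and sp: "\<And>s. s \<in> SS \<Longrightarrow> spectral_proj n \<sigma> s (E s)"
    and Ec: "\<And>s. E s \<in> carrier_mat n n"
    and "\<And>i j. i < n \<Longrightarrow> j < n \<Longrightarrow> (\<Sum>s\<in>SS. s * E s $$ (i, j)) = \<sigma> $$ (i, j)"
    and sumE: "\<And>i j. i < n \<Longrightarrow> j < n \<Longrightarrow> (\<Sum>s\<in>SS. E s $$ (i, j)) = (if i = j then 1 else 0)"
    and ro': "nondegenerate n \<sigma> \<Longrightarrow> \<forall>s\<in>SS. \<exists>p q. \<forall>i<n. \<forall>j<n. E s $$ (i, j) = p i * q j"
    by (rule spectral[OF sa]) blast
  have ro: "\<forall>s\<in>SS. \<exists>p q. \<forall>i<n. \<forall>j<n. E s $$ (i, j) = p i * q j" using ro'[OF nd] .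
  have key: "(emb n m l (E s) * \<rho>) $$ (a, b) = (emb2 n m k l (E s) (E s) * \<rho>) $$ (a, b)"
    if s: "s \<in> SS" and ab: "a < N" "b < N" for s a b
  proof -
    have EH: "mat_adjoint (E s) = E s" and EE: "E s * E s = E s"
      using sp[OF s] unfolding spectral_proj_def self_adjoint_def by auto
    note cp = compl_proj[OF Ec EH EE]
    define Rm where "Rm = emb2 n m k l (1\<^sub>m n - E s) (E s)"
    have Rc: "Rm \<in> carrier_mat N N" by (simp add: Rm_def N_def)
    have RH: "mat_adjoint Rm = Rm" unfolding Rm_def by (rule emb2_herm[OF n cp(3) Ec cp(1) EH])
    have RR: "Rm * Rm = Rm" unfolding Rm_def by (rule emb2_idem[OF n kl cp(3) Ec cp(2) EE])
    have Req: "Rm = emb n m l (E s) - emb2 n m k l (E s) (E s)"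
      unfolding Rm_def emb2_minus[OF one_carrier_mat Ec n] emb2_one_left[OF kl(3) n kl(1)] ..
    have c1: "emb n m l (E s) \<in> carrier_mat N N" "emb2 n m k l (E s) (E s) \<in> carrier_mat N N"
      by (auto simp: N_def)
    have RR2: "Rm * \<rho> = emb n m l (E s) * \<rho> - emb2 n m k l (E s) (E s) * \<rho>"
      unfolding Req using c1 R by (intro minus_mult_distrib_mat[of _ N N]) auto
    have smc1: "mtrace (emb n m k (E s) * emb n m l (E s) * \<rho>) = mtrace (emb n m l (E s) * \<rho>)"
      using smc[unfolded SMC_def, rule_format, OF sp[OF s] kl(1,2)] .
    have "mtrace (Rm * \<rho>) = mtrace (emb n m l (E s) * \<rho>) - mtrace (emb2 n m k l (E s) (E s) * \<rho>)"
      unfolding RR2 using c1 R by (intro mtrace_minus[of _ N]) auto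
    also have "emb2 n m k l (E s) (E s) = emb n m k (E s) * emb n m l (E s)"
      by (rule emb_mult_diff[OF n kl Ec Ec, symmetric])
    finally have "mtrace (Rm * \<rho>) = 0" using smc1 by simp
    hence "Rm * \<rho> = 0\<^sub>m N N" by (intro proj_trace_zero[OF R H Ps Rc RH RR])
    hence "(emb n m l (E s) * \<rho> - emb2 n m k l (E s) (E s) * \<rho>) $$ (a, b) = 0"
      using ab unfolding RR2 by simp
    moreover have "(emb n m l (E s) * \<rho> - emb2 n m k l (E s) (E s) * \<rho>) $$ (a, b) =
       (emb n m l (E s) * \<rho>) $$ (a, b) - (emb2 n m k l (E s) (E s) * \<rho>) $$ (a, b)"
      by (rule index_minus_mat(1)) (use ab c1 R in auto)
    ultimately show ?thesis by simp
  qed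
  have dec: "\<rho> $$ (a, b) = (\<Sum>s\<in>SS. (emb2 n m k l (E s) (E s) * \<rho>) $$ (a, b))"
    if ab: "a < N" "b < N" for a b
  proof -
    have em: "(\<Sum>s\<in>SS. emb n m l (E s) $$ (a, c)) = (if a = c then 1 else 0)" if c: "c < N" for c
    proof -
      have "(\<Sum>s\<in>SS. emb n m l (E s) $$ (a, c)) =
          (if agree n m {l} a c then (\<Sum>s\<in>SS. E s $$ (dig n l a, dig n l c)) else 0)"
        using ab c by (simp add: emb_index N_def)
      also have "\<dots> = (if agree n m {l} a c \<and> dig n l a = dig n l c then 1 else 0)"
        using n by (simp add: sumE dig_lt)
      also have "(agree n m {l} a c \<and> dig n l a = dig n l c) = (a = c)"
        using dig_unique[of a n m c] ab c unfolding agree_def N_def by auto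
      finally show ?thesis .
    qed
    have "(\<Sum>s\<in>SS. (emb2 n m k l (E s) (E s) * \<rho>) $$ (a, b)) = (\<Sum>s\<in>SS. (emb n m l (E s) * \<rho>) $$ (a, b))"
      using key ab by simp
    also have "\<dots> = (\<Sum>s\<in>SS. \<Sum>c<N. emb n m l (E s) $$ (a, c) * \<rho> $$ (c, b))"
      using ab R by (intro sum.cong refl mult_entry) (auto simp: N_def)
    also have "\<dots> = (\<Sum>c<N. (\<Sum>s\<in>SS. emb n m l (E s) $$ (a, c)) * \<rho> $$ (c, b))"
      by (subst sum.swap) (simp add: sum_distrib_right)
    also have "\<dots> = (\<Sum>c<N. if c = a then \<rho> $$ (c, b) else 0)"
      by (intro sum.cong refl) (auto simp: em)
    also have "\<dots> = \<rho> $$ (a, b)" using ab by simp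
    finally show ?thesis by simp
  qed
  define sw where "sw a = perm_idx n m (transpose k l) a" for a
  have swl: "sw a < N" for a using perm_idx_lt[OF n] by (simp add: sw_def N_def)
  have dsw: "dig n j (sw a) = dig n (transpose k l j) a" if "j < m" for j a
    using dig_perm_idx[OF n that] by (simp add: sw_def)
  have e2: "emb2 n m k l (E s) (E s) $$ (sw a, c) = emb2 n m k l (E s) (E s) $$ (a, c)"
    if s: "s \<in> SS" and ac: "a < N" "c < N" for s a c
  proof -
    obtain p q where pq: "\<forall>i<n. \<forall>j<n. E s $$ (i, j) = p i * q j" using ro s by blast
    have ag: "agree n m {k, l} (sw a) c = agree n m {k, l} a c"
      unfolding agree_def using dsw by (auto simp: transpose_def)
    have "E s $$ (dig n k (sw a), dig n k c) * E s $$ (dig n l (sw a), dig n l c) =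
          E s $$ (dig n k a, dig n k c) * E s $$ (dig n l a, dig n l c)"
      using dsw[OF kl(1)] dsw[OF kl(2)] pq n by (simp add: dig_lt)
    then show ?thesis using ac swl ag by (simp add: emb2_index N_def)
  qed
  have r1: "\<rho> $$ (sw a, b) = \<rho> $$ (a, b)" if ab: "a < N" "b < N" for a b
  proof -
    have "\<rho> $$ (sw a, b) = (\<Sum>s\<in>SS. (emb2 n m k l (E s) (E s) * \<rho>) $$ (sw a, b))"
      by (rule dec[OF swl ab(2)])
    also have "\<dots> = (\<Sum>s\<in>SS. \<Sum>c<N. emb2 n m k l (E s) (E s) $$ (sw a, c) * \<rho> $$ (c, b))"
      using ab R swl by (intro sum.cong refl mult_entry) (auto simp: N_def)
    also have "\<dots> = (\<Sum>s\<in>SS. \<Sum>c<N. emb2 n m k l (E s) (E s) $$ (a, c) * \<rho> $$ (c, b))"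
      using e2 ab by (intro sum.cong refl) auto
    also have "\<dots> = (\<Sum>s\<in>SS. (emb2 n m k l (E s) (E s) * \<rho>) $$ (a, b))"
      using ab R by (intro sum.cong refl mult_entry[symmetric]) (auto simp: N_def)
    also have "\<dots> = \<rho> $$ (a, b)" by (rule dec[OF ab, symmetric])
    finally show ?thesis .
  qed
  have Hc: "\<rho> $$ (a, b) = cnj (\<rho> $$ (b, a))" if "a < N" "b < N" for a b
    using adj_index[of a \<rho> b] that R H by auto
  have r2: "\<rho> $$ (a, sw b) = \<rho> $$ (a, b)" if ab: "a < N" "b < N" for a b
    using Hc[OF ab(1) swl] r1[OF ab(2,1)] Hc[OF ab] by simp
  show ?thesis
  proof (rule eq_matI)
    fix a b assume "a < dim_row \<rho>" "b < dim_col \<rho>"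
    hence ab: "a < N" "b < N" using R by auto
    have "perm_conj n m (transpose k l) \<rho> $$ (a, b) = \<rho> $$ (sw a, sw b)"
      using ab by (simp add: perm_conj_def sw_def N_def)
    also have "\<dots> = \<rho> $$ (a, sw b)" by (rule r1[OF ab(1) swl])
    also have "\<dots> = \<rho> $$ (a, b)" by (rule r2[OF ab])
    finally show "perm_conj n m (transpose k l) \<rho> $$ (a, b) = \<rho> $$ (a, b)" .
  qed (use R in \<open>auto simp: perm_conj_def N_def\<close>)
qed

lemma perm_idx_comp: assumes n: "0 < n" and g: "\<And>j. j < m \<Longrightarrow> g j < m"
  shows "perm_idx n m g (perm_idx n m f a) = perm_idx n m (f \<circ> g) a"
  by (rule dig_unique[of _ n m]) (auto simp: perm_idx_lt[OF n] dig_perm_idx[OF n] g)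

lemma perm_idx_id: assumes n: "0 < n" and a: "a < n ^ m" shows "perm_idx n m id a = a"
  by (rule dig_unique[of _ n m]) (auto simp: perm_idx_lt[OF n] dig_perm_idx[OF n] a)

lemma perm_conj_comp: assumes n: "0 < n" and p: "p permutes {..<m}" and t: "t permutes {..<m}"
  and R: "\<rho> \<in> carrier_mat (n^m) (n^m)"
  shows "perm_conj n m (t \<circ> p) \<rho> = perm_conj n m p (perm_conj n m t \<rho>)"
proof (rule eq_matI)
  fix a b assume "a < dim_row (perm_conj n m p (perm_conj n m t \<rho>))" "b < dim_col (perm_conj n m p (perm_conj n m t \<rho>))"
  hence ab: "a < n^m" "b < n^m" by (auto simp: perm_conj_def)
  have inv: "inv_into UNIV (t \<circ> p) = inv_into UNIV p \<circ> inv_into UNIV t" using p t by (intro o_inv_distrib) (auto simp: permutes_bij)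
  have it: "inv_into UNIV t j < m" if "j < m" for j using permutes_in_image[OF permutes_inv[OF t]] that by auto
  show "perm_conj n m (t \<circ> p) \<rho> $$ (a, b) = perm_conj n m p (perm_conj n m t \<rho>) $$ (a, b)"
    using ab by (simp add: perm_conj_def perm_idx_lt[OF n] inv perm_idx_comp[OF n it])
qed (auto simp: perm_conj_def)

lemma perm_conj_id: assumes n: "0 < n" and R: "\<rho> \<in> carrier_mat (n^m) (n^m)"
  shows "perm_conj n m id \<rho> = \<rho>"
  by (rule eq_matI) (use R in \<open>auto simp: perm_conj_def perm_idx_id[OF n]\<close>)

lemma part_c: assumes st: "setting n m \<sigma> \<rho>" and nd: "nondegenerate n \<sigma>" and smc: "SMC n m \<sigma> \<rho>"
  shows "SSC n m \<rho>"
  unfolding SSC_def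
proof (intro allI impI)
  have n: "0 < n" and dens: "density_op (n^m) \<rho>" using st unfolding setting_def by auto
  have R: "\<rho> \<in> carrier_mat (n^m) (n^m)" using density_parts[OF dens] by auto
  fix \<pi> assume pi: "\<pi> permutes {..<m}"
  have fin: "finite {..<m}" by simp
  from pi fin show "perm_conj n m \<pi> \<rho> = \<rho>"
  proof (induction rule: permutes_induct)
    case id
    then show ?case by (rule perm_conj_id[OF n R])
  next
    case (swap a b p)
    have "perm_conj n m (transpose a b \<circ> p) \<rho> = perm_conj n m p (perm_conj n m (transpose a b) \<rho>)"
      using swap by (intro perm_conj_comp[OF n _ _ R]) (auto intro: permutes_swap_id)
    also have "perm_conj n m (transpose a b) \<rho> = \<rho>"
      using swap_inv[OF st nd smc] swap by auto
    finally show ?case using swap by simp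
  qed
qed

lemma part_b_from_c: assumes st: "setting n m \<sigma> \<rho>" and ssc: "SSC n m \<rho>" shows "RSC n m \<rho>"
  unfolding RSC_def
proof (intro allI impI)
  fix k l assume kl: "k < m" "l < m"
  have n: "0 < n" and dens: "density_op (n^m) \<rho>" using st unfolding setting_def by auto
  have R: "\<rho> \<in> carrier_mat (n^m) (n^m)" using density_parts[OF dens] by auto
  define N where "N = n ^ m"
  define t where "t = transpose k l"
  have tp: "t permutes {..<m}" unfolding t_def using kl by (intro permutes_swap_id) auto
  have inv: "inv_into UNIV t = t" by (simp add: t_def)
  define sw where "sw a = perm_idx n m t a" for a
  have tm: "t j < m" if "j < m" for j using permutes_in_image[OF tp] that by auto
  have swl: "sw a < N" for a using perm_idx_lt[OF n] by (simp add: sw_def N_def)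
  have swsw: "sw (sw a) = a" if "a < N" for a
    using perm_idx_comp[OF n tm, where f=t and a=a] perm_idx_id[OF n, of a] that by (simp add: sw_def t_def N_def)
  have dsw: "dig n j (sw a) = dig n (t j) a" if "j < m" for j a
    using dig_perm_idx[OF n that] by (simp add: sw_def)
  have inv_r: "\<rho> $$ (sw a, sw b) = \<rho> $$ (a, b)" if "a < N" "b < N" for a b
  proof -
    have "perm_conj n m t \<rho> $$ (a, b) = \<rho> $$ (a, b)" using ssc tp unfolding SSC_def by simp
    then show ?thesis using that by (simp add: perm_conj_def inv sw_def N_def)
  qed
  have reidx: "(\<Sum>a<N. f a) = (\<Sum>a<N. f (sw a))" for f :: "nat \<Rightarrow> complex"
    by (rule sum.reindex_bij_witness[of _ sw sw]) (auto simp: swsw swl)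
  show "ptrace n m k \<rho> = ptrace n m l \<rho>"
  proof (rule eq_matI)
    fix x y assume "x < dim_row (ptrace n m l \<rho>)" "y < dim_col (ptrace n m l \<rho>)"
    hence xy: "x < n" "y < n" by (auto simp: ptrace_def)
    define F where "F j a b = (if dig n j a = x \<and> dig n j b = y \<and> (\<forall>i<m. i \<noteq> j \<longrightarrow> dig n i a = dig n i b)
       then \<rho> $$ (a, b) else 0)" for j a b
    have Fsw: "F k (sw a) (sw b) = F l a b" if "a < N" "b < N" for a b
    proof -
      have d1: "dig n k (sw a) = dig n l a" "dig n k (sw b) = dig n l b"
        using dsw[OF kl(1)] by (auto simp: t_def)
      have d2: "(\<forall>i<m. i \<noteq> k \<longrightarrow> dig n i (sw a) = dig n i (sw b)) = (\<forall>i<m. i \<noteq> l \<longrightarrow> dig n i a = dig n i b)"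
      proof
        assume h: "\<forall>i<m. i \<noteq> k \<longrightarrow> dig n i (sw a) = dig n i (sw b)"
        show "\<forall>i<m. i \<noteq> l \<longrightarrow> dig n i a = dig n i b"
        proof (intro allI impI)
          fix i assume i: "i < m" "i \<noteq> l"
          have "t i < m" "t i \<noteq> k" using tm[OF i(1)] i by (auto simp: t_def transpose_def)
          then have "dig n (t i) (sw a) = dig n (t i) (sw b)" using h by blast
          then show "dig n i a = dig n i b" using dsw \<open>t i < m\<close> by (simp add: t_def)
        qed
      next
        assume h: "\<forall>i<m. i \<noteq> l \<longrightarrow> dig n i a = dig n i b"
        show "\<forall>i<m. i \<noteq> k \<longrightarrow> dig n i (sw a) = dig n i (sw b)"
        proof (intro allI impI)
          fix i assume i: "i < m" "i \<noteq> k"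
          have "t i < m" "t i \<noteq> l" using tm[OF i(1)] i by (auto simp: t_def transpose_def)
          then show "dig n i (sw a) = dig n i (sw b)" using h dsw i(1) by simp
        qed
      qed
      show ?thesis unfolding F_def d1 d2 using inv_r that by auto
    qed
    have "ptrace n m k \<rho> $$ (x, y) = (\<Sum>a<N. \<Sum>b<N. F k a b)"
      using xy by (simp add: ptrace_def F_def N_def)
    also have "\<dots> = (\<Sum>a<N. \<Sum>b<N. F k (sw a) (sw b))"
      by (subst reidx) (simp add: reidx[of "F k (sw _)"])
    also have "\<dots> = (\<Sum>a<N. \<Sum>b<N. F l a b)" using Fsw by simp
    also have "\<dots> = ptrace n m l \<rho> $$ (x, y)"
      using xy by (simp add: ptrace_def F_def N_def)
    finally show "ptrace n m k \<rho> $$ (x, y) = ptrace n m l \<rho> $$ (x, y)" .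
  qed (auto simp: ptrace_def)
qed

definition sig0 :: "complex mat" where "sig0 = mat 2 2 (\<lambda>(i, j). if i = j \<and> i = 1 then 1 else 0)"
definition rho0 :: "complex mat" where "rho0 = mat 4 4 (\<lambda>(i, j). if i = j then 1/4 else 0)"

lemma sig0_carrier: "sig0 \<in> carrier_mat 2 2" by (simp add: sig0_def)
lemma rho0_carrier: "rho0 \<in> carrier_mat (2^2) (2^2)" by (simp add: rho0_def)

lemma sig0_sa: "self_adjoint 2 sig0"
  unfolding self_adjoint_def by (auto simp: sig0_def intro!: eq_matI)

lemma sig0_idem: "sig0 * sig0 = sig0"
  by (rule eq_matI) (auto simp: sig0_def scalar_prod_def lessThan_nat_numeral atLeast0LessThan)

lemma rho0_mv: assumes v: "v \<in> carrier_vec 4" shows "rho0 *\<^sub>v v = (1/4) \<cdot>\<^sub>v v"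
proof (rule eq_vecI)
  fix i assume "i < dim_vec ((1/4) \<cdot>\<^sub>v v)"
  hence i: "i < 4" using v by simp
  have "(rho0 *\<^sub>v v) $ i = (\<Sum>j<4. rho0 $$ (i, j) * v $ j)"
    using v i by (intro mv_entry) (auto simp: rho0_def)
  also have "\<dots> = (\<Sum>j<4. if j = i then v $ i / 4 else 0)"
    using i by (intro sum.cong) (auto simp: rho0_def)
  also have "\<dots> = v $ i / 4" using i by simp
  finally show "(rho0 *\<^sub>v v) $ i = ((1/4) \<cdot>\<^sub>v v) $ i" using i v by simp
qed (use v in \<open>auto simp: rho0_def\<close>)

lemma rho0_dens: "density_op (2^2) rho0"
  unfolding density_op_def
proof (intro conjI ballI)
  show "self_adjoint (2^2) rho0" unfolding self_adjoint_def by (auto simp: rho0_def intro!: eq_matI)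
  show "mtrace rho0 = 1" by (simp add: mtrace_def rho0_def lessThan_nat_numeral)
  fix v :: "complex vec" assume v: "v \<in> carrier_vec (2^2)"
  hence v4: "v \<in> carrier_vec 4" by simp
  have e: "conjugate v \<bullet> (rho0 *\<^sub>v v) = (1/4) * (conjugate v \<bullet> v)"
    using v4 by (simp add: rho0_mv)
  show "Im (conjugate v \<bullet> (rho0 *\<^sub>v v)) = 0" "0 \<le> Re (conjugate v \<bullet> (rho0 *\<^sub>v v))"
    unfolding e using sq_real[OF v4] by simp_all
qed

lemma setting0: "setting 2 2 sig0 rho0"
  unfolding setting_def using sig0_sa rho0_dens by simp

lemma sig0_mv: "v \<in> carrier_vec 2 \<Longrightarrow> (sig0 *\<^sub>v v) $ 0 = 0 \<and> (sig0 *\<^sub>v v) $ 1 = v $ 1"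
  by (auto simp: sig0_def scalar_prod_def lessThan_nat_numeral atLeast0LessThan)

lemma nd0: "nondegenerate 2 sig0"
proof -
  have "{s. is_eigenvalue 2 sig0 s} = {0, 1}"
  proof
    show "{s. is_eigenvalue 2 sig0 s} \<subseteq> {0, 1}"
    proof
      fix s assume "s \<in> {s. is_eigenvalue 2 sig0 s}"
      then obtain v where v: "v \<in> carrier_vec 2" "v \<noteq> 0\<^sub>v 2" "sig0 *\<^sub>v v = s \<cdot>\<^sub>v v"
        unfolding is_eigenvalue_def by auto
      have e0: "s * v $ 0 = 0" using sig0_mv[OF v(1)] arg_cong[OF v(3), of "\<lambda>x. x $ 0"] v(1) by simp
      have e1: "s * v $ 1 = v $ 1" using sig0_mv[OF v(1)] arg_cong[OF v(3), of "\<lambda>x. x $ 1"] v(1) by simp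
      have "v $ 0 \<noteq> 0 \<or> v $ 1 \<noteq> 0"
      proof (rule ccontr)
        assume "\<not> (v $ 0 \<noteq> 0 \<or> v $ 1 \<noteq> 0)"
        hence "v = 0\<^sub>v 2" using v(1) by (intro eq_vecI) (auto simp: less_2_cases_iff)
        then show False using v(2) by simp
      qed
      then show "s \<in> {0, 1}" using e0 e1 by auto
    qed
    show "{0, 1} \<subseteq> {s. is_eigenvalue 2 sig0 s}"
    proof -
      have "is_eigenvalue 2 sig0 0"
        unfolding is_eigenvalue_def
        by (rule bexI[of _ "unit_vec 2 0"]) (auto simp: sig0_def intro!: eq_vecI simp: scalar_prod_def lessThan_nat_numeral atLeast0LessThan)
      moreover have "is_eigenvalue 2 sig0 1"
        unfolding is_eigenvalue_def
        by (rule bexI[of _ "unit_vec 2 1"]) (auto simp: sig0_def intro!: eq_vecI simp: scalar_prod_def lessThan_nat_numeral atLeast0LessThan)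
      ultimately show ?thesis by auto
    qed
  qed
  then show ?thesis unfolding nondegenerate_def by simp
qed

lemma sp0: "spectral_proj 2 sig0 1 sig0"
  unfolding spectral_proj_def
proof (intro conjI ballI)
  show "is_eigenvalue 2 sig0 1"
    unfolding is_eigenvalue_def
    by (rule bexI[of _ "unit_vec 2 1"]) (auto simp: sig0_def intro!: eq_vecI simp: scalar_prod_def lessThan_nat_numeral atLeast0LessThan)
  show "self_adjoint 2 sig0" by (rule sig0_sa)
  show "sig0 * sig0 = sig0" by (rule sig0_idem)
  fix v :: "complex vec" assume "v \<in> carrier_vec 2"
  then show "(sig0 *\<^sub>v v = v) = (sig0 *\<^sub>v v = 1 \<cdot>\<^sub>v v)" by simp
qed

lemma trace_rho0: "X \<in> carrier_mat 4 4 \<Longrightarrow> mtrace (X * rho0) = (1/4) * (\<Sum>a<4. X $$ (a, a))"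
  by (subst mtrace_mult[of _ 4]) (auto simp: rho0_def sum_distrib_left mult.commute lessThan_nat_numeral)

lemma not_smc0: "\<not> SMC 2 2 sig0 rho0"
proof
  assume smc: "SMC 2 2 sig0 rho0"
  have h: "mtrace (emb 2 2 0 sig0 * emb 2 2 1 sig0 * rho0) = mtrace (emb 2 2 1 sig0 * rho0)"
    using smc[unfolded SMC_def, rule_format, OF sp0, of 0 1] by simp
  have "emb 2 2 0 sig0 * emb 2 2 1 sig0 = emb2 2 2 0 1 sig0 sig0"
    by (rule emb_mult_diff) (auto simp: sig0_carrier)
  hence "mtrace (emb2 2 2 0 1 sig0 sig0 * rho0) = mtrace (emb 2 2 1 sig0 * rho0)" using h by simp
  moreover have "mtrace (emb2 2 2 0 1 sig0 sig0 * rho0) = 1/4"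
    by (subst trace_rho0) (auto simp: emb2_def agree_def dig_def sig0_def lessThan_nat_numeral)
  moreover have "mtrace (emb 2 2 1 sig0 * rho0) = 1/2"
    by (subst trace_rho0) (auto simp: emb_def dig_def sig0_def lessThan_nat_numeral)
  ultimately have "(1/4 :: complex) = 1/2" by metis
  then show False by simp
qed

lemma ec0: "EC 2 2 sig0 rho0"
proof -
  have t: "mtrace (emb 2 2 k sig0 * rho0) = 1/2" if "k < 2" for k
  proof -
    have "k = 0 \<or> k = 1" using that by auto
    then show ?thesis
      by (elim disjE) (subst trace_rho0, auto simp: emb_def dig_def sig0_def lessThan_nat_numeral)+
  qed
  show ?thesis unfolding EC_def
  proof (intro allI impI)
    fix k l :: nat assume "k < 2" "l < 2"
    then show "mtrace (emb 2 2 k sig0 * rho0) = mtrace (emb 2 2 l sig0 * rho0)"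
      using t[of k] t[of l] by (simp only:)
  qed
qed

lemma ssc0: "SSC 2 2 rho0"
  unfolding SSC_def
proof (intro allI impI)
  fix \<pi> assume pi: "\<pi> permutes {..<2::nat}"
  define p where "p a = perm_idx 2 2 (inv_into UNIV \<pi>) a" for a
  have ip: "inv_into UNIV \<pi> permutes {..<2}" using permutes_inv[OF pi] .
  have inj: "a = b" if ab: "a < 4" "b < 4" "p a = p b" for a b
  proof (rule dig_unique[of _ 2 2])
    show "a < 2^2" "b < 2^2" using ab by auto
    show "\<forall>j<2. dig 2 j a = dig 2 j b"
    proof (intro allI impI)
      fix j :: nat assume j: "j < 2"
      have "\<pi> j < 2" using permutes_in_image[OF pi] j by auto
      hence "dig 2 (\<pi> j) (p a) = dig 2 (\<pi> j) (p b)" using ab by simp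
      hence "dig 2 (inv_into UNIV \<pi> (\<pi> j)) a = dig 2 (inv_into UNIV \<pi> (\<pi> j)) b"
        using \<open>\<pi> j < 2\<close> by (simp add: p_def dig_perm_idx)
      then show "dig 2 j a = dig 2 j b" using permutes_inverses(2)[OF pi] by simp
    qed
  qed
  show "perm_conj 2 2 \<pi> rho0 = rho0"
  proof (rule eq_matI)
    fix a b assume "a < dim_row rho0" "b < dim_col rho0"
    hence ab: "a < 4" "b < 4" by (auto simp: rho0_def)
    have pl: "p a < 4" "p b < 4" using perm_idx_lt[of 2 2] by (auto simp: p_def)
    show "perm_conj 2 2 \<pi> rho0 $$ (a, b) = rho0 $$ (a, b)"
      using ab pl inj[OF ab] by (auto simp: perm_conj_def rho0_def p_def[symmetric])
  qed (auto simp: perm_conj_def rho0_def)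
qed

theorem proposition5:
  shows "((\<forall>n m \<sigma> \<rho>. setting n m \<sigma> \<rho> \<longrightarrow> SMC n m \<sigma> \<rho> \<longrightarrow> EC n m \<sigma> \<rho>) \<and>
          (\<exists>n m \<sigma> \<rho>. setting n m \<sigma> \<rho> \<and> EC n m \<sigma> \<rho> \<and> \<not> SMC n m \<sigma> \<rho>))
       \<and> ((\<forall>n m \<sigma> \<rho>. setting n m \<sigma> \<rho> \<longrightarrow> nondegenerate n \<sigma> \<longrightarrow> SMC n m \<sigma> \<rho> \<longrightarrow> RSC n m \<rho>) \<and>
          (\<exists>n m \<sigma> \<rho>. setting n m \<sigma> \<rho> \<and> nondegenerate n \<sigma> \<and> RSC n m \<rho> \<and> \<not> SMC n m \<sigma> \<rho>))
       \<and> ((\<forall>n m \<sigma> \<rho>. setting n m \<sigma> \<rho> \<longrightarrow> nondegenerate n \<sigma> \<longrightarrow> SMC n m \<sigma> \<rho> \<longrightarrow> SSC n m \<rho>) \<and>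
          (\<exists>n m \<sigma> \<rho>. setting n m \<sigma> \<rho> \<and> nondegenerate n \<sigma> \<and> SSC n m \<rho> \<and> \<not> SMC n m \<sigma> \<rho>))"
proof -
  have a1: "\<forall>n m \<sigma> \<rho>. setting n m \<sigma> \<rho> \<longrightarrow> SMC n m \<sigma> \<rho> \<longrightarrow> EC n m \<sigma> \<rho>"
    using part_a by blast
  have a2: "\<exists>n m \<sigma> \<rho>. setting n m \<sigma> \<rho> \<and> EC n m \<sigma> \<rho> \<and> \<not> SMC n m \<sigma> \<rho>"
    using setting0 ec0 not_smc0 by blast
  have b1: "\<forall>n m \<sigma> \<rho>. setting n m \<sigma> \<rho> \<longrightarrow> nondegenerate n \<sigma> \<longrightarrow> SMC n m \<sigma> \<rho> \<longrightarrow> RSC n m \<rho>"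
    using part_b_from_c part_c by blast
  have b2: "\<exists>n m \<sigma> \<rho>. setting n m \<sigma> \<rho> \<and> nondegenerate n \<sigma> \<and> RSC n m \<rho> \<and> \<not> SMC n m \<sigma> \<rho>"
    using setting0 nd0 part_b_from_c[OF setting0 ssc0] not_smc0 by blast
  have c1: "\<forall>n m \<sigma> \<rho>. setting n m \<sigma> \<rho> \<longrightarrow> nondegenerate n \<sigma> \<longrightarrow> SMC n m \<sigma> \<rho> \<longrightarrow> SSC n m \<rho>"
    using part_c by blast
  have c2: "\<exists>n m \<sigma> \<rho>. setting n m \<sigma> \<rho> \<and> nondegenerate n \<sigma> \<and> SSC n m \<rho> \<and> \<not> SMC n m \<sigma> \<rho>"
    using setting0 nd0 ssc0 not_smc0 by blast
  show ?thesis using a1 a2 b1 b2 c1 c2 by blast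
qed

end
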